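(* Let $G$ be a planar graph which is not homeomorphic to $S^{1}$ and which admits a checkerboard coloring on $S^{2}$ with respect to a cellular embedding $p:G\to S^{2}$. Define $\omega_p:\Gamma(G)\to\mathbb{Z}$ by $\omega_p(\gamma)=1$ if $\gamma\in\Gamma_p^b(G)$, $\omega_p(\gamma)=-1$ if $\gamma\in\Gamma_p^w(G)$, and $\omega_p(\gamma)=0$ if $\gamma\in\Gamma(G)\setminus\Gamma_p(G)$. Then $\omega_p$ is weakly balanced on every edge $e$ of $G$, i.e. $\sum_{\gamma\in\Gamma_e(G)}\omega_p(\gamma)=0$ in $\mathbb{Z}$.
   Context: Graphs are finite, without isolated vertices and without vertices of degree one. A cycle is a subgraph homeomorphic to $S^1$; $\Gamma(G)$ is the set of all cycles of $G$, and $\Gamma_e(G)$ those containing the edge $e$. An embedding $p:G\to S^2$ is cellular if the closure of each connected component of $S^2-p(G)$ is a disk; then $\Gamma_p(G)\subset\Gamma(G)$ denotes the set of cycles that are the boundaries of the components of $S^2-p(G)$. $G$ admits a checkerboard coloring with respect to a cellular embedding $p$ if the components of $S^2-p(G)$ can be colored black and white so that any two components adjacent along an edge have different colors; $\Gamma_p^b(G)$ (resp. $\Gamma_p^w(G)$) is the set of boundaries of black (resp. white) components. *)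

theory Defs
  imports "HOL-Analysis.Analysis"
begin

text \<open>A finite multigraph (loops and multiple edges allowed) is given by a vertex set V,
an edge set E and endpoint maps src, tgt. Its geometric realization is embedded in the
2-sphere S2 (the unit sphere of R^3): vertex v goes to pv v, edge e goes to the simple
path pe e (an arc, or a simple closed curve for a loop) from pv (src e) to pv (tgt e).\<close>

definition S2 :: "(real^3) set" where
  "S2 = sphere 0 1"

definition degree :: "'e set \<Rightarrow> ('e \<Rightarrow> 'v) \<Rightarrow> ('e \<Rightarrow> 'v) \<Rightarrow> 'v \<Rightarrow> nat" where
  "degree E src tgt v = card {e\<in>E. src e = v} + card {e\<in>E. tgt e = v}"

definition is_graph :: "'v set \<Rightarrow> 'e set \<Rightarrow> ('e \<Rightarrow> 'v) \<Rightarrow> ('e \<Rightarrow> 'v) \<Rightarrow> bool" where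
  "is_graph V E src tgt \<longleftrightarrow> finite V \<and> finite E \<and>
     (\<forall>e\<in>E. src e \<in> V \<and> tgt e \<in> V) \<and>
     (\<forall>v\<in>V. degree E src tgt v \<ge> 2)"

definition is_embedding :: "'v set \<Rightarrow> 'e set \<Rightarrow> ('e \<Rightarrow> 'v) \<Rightarrow> ('e \<Rightarrow> 'v) \<Rightarrow>
    ('v \<Rightarrow> real^3) \<Rightarrow> ('e \<Rightarrow> real \<Rightarrow> real^3) \<Rightarrow> bool" where
  "is_embedding V E src tgt pv pe \<longleftrightarrow>
     inj_on pv V \<and> pv ` V \<subseteq> S2 \<and>
     (\<forall>e\<in>E. simple_path (pe e) \<and> pathstart (pe e) = pv (src e) \<and>
              pathfinish (pe e) = pv (tgt e) \<and> path_image (pe e) \<subseteq> S2) \<and>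
     (\<forall>e\<in>E. \<forall>v\<in>V. pv v \<in> path_image (pe e) \<longrightarrow> v = src e \<or> v = tgt e) \<and>
     (\<forall>e\<in>E. \<forall>e'\<in>E. e \<noteq> e' \<longrightarrow>
         path_image (pe e) \<inter> path_image (pe e') \<subseteq> pv ` {src e, tgt e})"

definition edges_image :: "('e \<Rightarrow> real \<Rightarrow> real^3) \<Rightarrow> 'e set \<Rightarrow> (real^3) set" where
  "edges_image pe C = (\<Union>e\<in>C. path_image (pe e))"

definition graph_image :: "'v set \<Rightarrow> 'e set \<Rightarrow> ('v \<Rightarrow> real^3) \<Rightarrow> ('e \<Rightarrow> real \<Rightarrow> real^3)
    \<Rightarrow> (real^3) set" where
  "graph_image V E pv pe = pv ` V \<union> edges_image pe E"

definition faces :: "'v set \<Rightarrow> 'e set \<Rightarrow> ('v \<Rightarrow> real^3) \<Rightarrow> ('e \<Rightarrow> real \<Rightarrow> real^3)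
    \<Rightarrow> (real^3) set set" where
  "faces V E pv pe = components (S2 - graph_image V E pv pe)"

text \<open>Boundary of a face, taken in S2 (a face is open in S2).\<close>
definition face_boundary :: "(real^3) set \<Rightarrow> (real^3) set" where
  "face_boundary F = closure F - F"

definition is_cellular :: "'v set \<Rightarrow> 'e set \<Rightarrow> ('v \<Rightarrow> real^3) \<Rightarrow> ('e \<Rightarrow> real \<Rightarrow> real^3)
    \<Rightarrow> bool" where
  "is_cellular V E pv pe \<longleftrightarrow>
     (\<forall>F\<in>faces V E pv pe. closure F homeomorphic cball (0::complex) 1)"

text \<open>Cycles: subgraphs homeomorphic to S^1. A subgraph homeomorphic to S^1 has no isolated
vertices, so it is determined by its edge set; its realization is homeomorphic to its image
under the embedding.\<close>
definition is_cycle :: "'e set \<Rightarrow> ('e \<Rightarrow> real \<Rightarrow> real^3) \<Rightarrow> 'e set \<Rightarrow> bool" where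
  "is_cycle E pe C \<longleftrightarrow> C \<subseteq> E \<and> C \<noteq> {} \<and>
     edges_image pe C homeomorphic sphere (0::complex) 1"

definition cycles :: "'e set \<Rightarrow> ('e \<Rightarrow> real \<Rightarrow> real^3) \<Rightarrow> 'e set set" where
  "cycles E pe = {C. is_cycle E pe C}"

definition cycles_through :: "'e set \<Rightarrow> ('e \<Rightarrow> real \<Rightarrow> real^3) \<Rightarrow> 'e \<Rightarrow> 'e set set" where
  "cycles_through E pe e = {C \<in> cycles E pe. e \<in> C}"

text \<open>Checkerboard colouring: col F = True means black, False means white.\<close>
definition is_checkerboard :: "'v set \<Rightarrow> 'e set \<Rightarrow> ('v \<Rightarrow> real^3) \<Rightarrow> ('e \<Rightarrow> real \<Rightarrow> real^3)
    \<Rightarrow> ((real^3) set \<Rightarrow> bool) \<Rightarrow> bool" where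
  "is_checkerboard V E pv pe col \<longleftrightarrow>
     (\<forall>F1\<in>faces V E pv pe. \<forall>F2\<in>faces V E pv pe.
        F1 \<noteq> F2 \<and> (\<exists>e\<in>E. path_image (pe e) \<subseteq> closure F1 \<inter> closure F2)
        \<longrightarrow> col F1 \<noteq> col F2)"

definition black_cycles :: "'v set \<Rightarrow> 'e set \<Rightarrow> ('v \<Rightarrow> real^3) \<Rightarrow> ('e \<Rightarrow> real \<Rightarrow> real^3)
    \<Rightarrow> ((real^3) set \<Rightarrow> bool) \<Rightarrow> 'e set set" where
  "black_cycles V E pv pe col = {C \<in> cycles E pe.
     \<exists>F\<in>faces V E pv pe. col F \<and> face_boundary F = edges_image pe C}"

definition white_cycles :: "'v set \<Rightarrow> 'e set \<Rightarrow> ('v \<Rightarrow> real^3) \<Rightarrow> ('e \<Rightarrow> real \<Rightarrow> real^3)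
    \<Rightarrow> ((real^3) set \<Rightarrow> bool) \<Rightarrow> 'e set set" where
  "white_cycles V E pv pe col = {C \<in> cycles E pe.
     \<exists>F\<in>faces V E pv pe. \<not> col F \<and> face_boundary F = edges_image pe C}"

definition omega :: "'v set \<Rightarrow> 'e set \<Rightarrow> ('v \<Rightarrow> real^3) \<Rightarrow> ('e \<Rightarrow> real \<Rightarrow> real^3)
    \<Rightarrow> ((real^3) set \<Rightarrow> bool) \<Rightarrow> 'e set \<Rightarrow> int" where
  "omega V E pv pe col C =
     (if C \<in> black_cycles V E pv pe col then 1
      else if C \<in> white_cycles V E pv pe col then -1 else 0)"

end

theory Submission
  imports Defs "HOL-Homology.Invariance_of_Domain"
begin

lemma S2_chart:
  assumes "b \<in> S2"
  shows "\<exists>\<sigma> \<tau>. homeomorphism (S2 - {b}) (UNIV::complex set) \<sigma> \<tau>"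
proof -
  define p :: "(real^3) set" where "p = {x. (axis 1 (1::real)) \<bullet> x = 0}"
  have affp: "affine p" unfolding p_def by (simp add: affine_hyperplane)
  have "aff_dim p = 2"
    unfolding p_def by (subst aff_dim_hyperplane) auto
  have "(S2 - {b}) homeomorphic p"
    unfolding S2_def
    by (rule homeomorphic_punctured_sphere_affine) (use assms affp \<open>aff_dim p = 2\<close> in \<open>auto simp: S2_def\<close>)
  also have "p homeomorphic (UNIV::complex set)"
    using affp \<open>aff_dim p = 2\<close> by (simp add: homeomorphic_affine_sets_eq)
  finally show ?thesis unfolding homeomorphic_def by blast
qed

lemma circle_simple_path:
  fixes J :: "'a::real_normed_vector set"
  assumes "J homeomorphic sphere (0::complex) 1"
  shows "\<exists>c. simple_path c \<and> pathfinish c = pathstart c \<and> path_image c = J"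
proof -
  obtain f g where hom: "homeomorphism (sphere (0::complex) 1) J f g"
    using assms homeomorphic_sym unfolding homeomorphic_def by blast
  define e where "e = (\<lambda>t::real. exp (\<i> * of_real (2*pi*t)))"
  define c where "c = f \<circ> e"
  have e_sph: "e t \<in> sphere 0 1" for t
    by (simp add: e_def norm_exp_i_times)
  have conte: "continuous_on UNIV e" unfolding e_def by (intro continuous_intros)
  have contf: "continuous_on (sphere 0 1) f" using hom homeomorphism_def by blast
  have injf: "inj_on f (sphere 0 1)" using hom unfolding homeomorphism_def by (meson inj_on_inverseI)
  have "path c"
    unfolding path_def c_def
  proof (rule continuous_on_compose)
    show "continuous_on {0..1} e" using conte continuous_on_subset by blast
    show "continuous_on (e ` {0..1}) f" by (rule continuous_on_subset[OF contf]) (use e_sph in blast)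
  qed
  moreover have "loop_free c"
    unfolding loop_free_def
  proof (intro ballI impI)
    fix x y assume xy: "x \<in> {0..1}" "y \<in> {0..1}" and eq: "c x = c y"
    then have "e x = e y" using injf e_sph unfolding c_def inj_on_def by auto
    then obtain n::int where n: "\<i> * of_real (2*pi*x) = \<i> * of_real (2*pi*y) + of_real (of_int (2*n) * pi) * \<i>"
      unfolding e_def exp_eq by blast
    then have "\<i> * of_real (2*pi*x) = \<i> * of_real (2*pi*y + of_int (2*n) * pi)"
      by (simp add: algebra_simps)
    then have "(of_real (2*pi*x) :: complex) = of_real (2*pi*y + of_int (2*n) * pi)"
      by simp
    then have "2*pi*x = 2*pi*y + of_int (2*n) * pi"
      using of_real_eq_iff by blast
    then have "pi * x = pi * (y + n)" by (simp add: algebra_simps)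
    then have xyn: "x = y + n" using pi_gt_zero by simp
    then have "real_of_int n \<le> 1" "real_of_int n \<ge> -1" using xy by auto
    then have "n \<le> 1" "n \<ge> -1" by linarith+
    then have "n = -1 \<or> n = 0 \<or> n = 1" by linarith
    then show "x = y \<or> x = 0 \<and> y = 1 \<or> x = 1 \<and> y = 0"
      using xy xyn by auto
  qed
  moreover have "pathfinish c = pathstart c"
  proof -
    have "\<i> * (2 * complex_of_real pi) = 2 * of_real pi * \<i>" by (simp add: algebra_simps)
    then have "exp (\<i> * (2 * complex_of_real pi)) = 1" using exp_two_pi_i by metis
    then show ?thesis by (simp add: pathfinish_def pathstart_def c_def e_def)
  qed
  moreover have "path_image c = J"
  proof -
    have "e ` {0..1} = sphere 0 1"
    proof
      show "e ` {0..1} \<subseteq> sphere 0 1" using e_sph by auto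
      show "sphere 0 1 \<subseteq> e ` {0..1}"
      proof
        fix z :: complex assume z: "z \<in> sphere 0 1"
        have "Arg2pi z / (2*pi) \<in> {0..1}"
          using Arg2pi_ge_0 Arg2pi_lt_2pi by (simp add: less_imp_le)
        moreover have "e (Arg2pi z / (2*pi)) = z"
          using z Arg2pi_eq[of z] by (simp add: e_def)
        ultimately show "z \<in> e ` {0..1}" by (metis image_eqI)
      qed
    qed
    then have "(f \<circ> e) ` {0..1} = f ` sphere 0 1" by (metis image_comp)
    then show ?thesis using hom unfolding path_image_def c_def homeomorphism_def
      by simp
  qed
  ultimately show ?thesis unfolding simple_path_def by blast
qed

lemma S2_compact [simp]: "compact S2" and S2_closed [simp]: "closed S2"
  and S2_connected: "connected S2" and S2_bounded [simp]: "bounded S2"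
  by (auto simp: S2_def intro: connected_sphere)

lemma S2_limpt: "q \<in> S2 \<Longrightarrow> q islimpt S2"
proof (rule connected_imp_perfect[OF S2_connected])
  fix x show "S2 \<noteq> {x}"
  proof
    assume "S2 = {x}"
    moreover have "(axis 1 1 :: real^3) \<in> S2" "(- axis 1 1 :: real^3) \<in> S2" by (auto simp: S2_def)
    ultimately have "(axis 1 (1::real) :: real^3) = - axis 1 1" by (metis singletonD)
    then have "(axis 1 (1::real) :: real^3) $ 1 = (- axis 1 1 :: real^3) $ 1" by (rule arg_cong)
    moreover have "(axis 1 (1::real) :: real^3) $ 1 = 1" "(- axis 1 (1::real) :: real^3) $ 1 = -1" by simp_all
    ultimately show False by simp
  qed
qed

lemma S2_not_circle: "\<not> (S2 homeomorphic sphere (0::complex) 1)"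
proof
  assume "S2 homeomorphic sphere (0::complex) 1"
  moreover have "simply_connected S2" unfolding S2_def by (rule simply_connected_sphere) simp
  ultimately have "simply_connected (sphere (0::complex) 1)"
    using homeomorphic_simply_connected_eq by blast
  then show False by (simp add: simply_connected_sphere_eq)
qed

lemma openin_S2_image:
  assumes hom: "homeomorphism (S2 - {q}) (UNIV::complex set) \<sigma> \<tau>" and "open A" and "q \<in> S2"
  shows "openin (top_of_set S2) (\<tau> ` A)"
proof -
  have "homeomorphism UNIV (S2 - {q}) \<tau> \<sigma>" using hom homeomorphism_sym by blast
  then have "openin (top_of_set (S2 - {q})) (\<tau> ` A)"
    using homeomorphism_imp_open_map \<open>open A\<close> by (metis open_openin subtopology_UNIV)
  moreover have "openin (top_of_set S2) (S2 - {q})" by (simp add: openin_delete)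
  ultimately show ?thesis using openin_trans by blast
qed

lemma Jordan_S2:
  fixes c :: "real \<Rightarrow> real^3"
  assumes sp: "simple_path c" and lp: "pathfinish c = pathstart c" and sub: "path_image c \<subseteq> S2"
  obtains U1 U2 where "openin (top_of_set S2) U1" "openin (top_of_set S2) U2"
    "connected U1" "connected U2" "U1 \<inter> U2 = {}" "U1 \<union> U2 = S2 - path_image c"
    "path_image c \<subseteq> closure U1" "path_image c \<subseteq> closure U2"
proof -
  let ?J = "path_image c"
  have "?J \<noteq> S2"
    using S2_not_circle homeomorphic_simple_path_image_circle[OF sp lp, of 1 0] by auto
  then obtain q where q: "q \<in> S2" "q \<notin> ?J" using sub by blast
  obtain \<sigma> \<tau> where hom: "homeomorphism (S2 - {q}) (UNIV::complex set) \<sigma> \<tau>"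
    using S2_chart[OF q(1)] by blast
  have \<tau>\<sigma>: "\<tau> (\<sigma> x) = x" if "x \<in> S2 - {q}" for x using hom that by (simp add: homeomorphism_def)
  have \<sigma>\<tau>: "\<sigma> (\<tau> w) = w" for w using hom by (simp add: homeomorphism_def)
  have \<tau>S: "\<tau> w \<in> S2 - {q}" for w using hom unfolding homeomorphism_def by blast
  have cont\<sigma>: "continuous_on (S2 - {q}) \<sigma>" and cont\<tau>: "continuous_on UNIV \<tau>"
    using hom by (auto simp: homeomorphism_def)
  have Jsub: "?J \<subseteq> S2 - {q}" using sub q by auto
  define c' where "c' = \<sigma> \<circ> c"
  have "path c'" unfolding c'_def
    using sp Jsub by (meson continuous_on_subset path_continuous_image simple_path_imp_path cont\<sigma>)
  moreover have "loop_free c'"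
    unfolding loop_free_def
  proof (intro ballI impI)
    fix x y :: real assume xy: "x \<in> {0..1}" "y \<in> {0..1}" "c' x = c' y"
    have "c x \<in> ?J" "c y \<in> ?J" using xy by (auto simp: path_image_def)
    then have "c x \<in> S2 - {q}" "c y \<in> S2 - {q}" using Jsub by blast+
    then have "c x = c y" using xy(3) \<tau>\<sigma> unfolding c'_def by (metis comp_apply)
    then show "x = y \<or> x = 0 \<and> y = 1 \<or> x = 1 \<and> y = 0"
      using sp xy unfolding simple_path_def loop_free_def by blast
  qed
  ultimately have sp': "simple_path c'" by (simp add: simple_path_def)
  have lp': "pathfinish c' = pathstart c'" using lp by (simp add: c'_def pathfinish_def pathstart_def)
  have pic': "path_image c' = \<sigma> ` ?J" unfolding c'_def by (simp add: path_image_compose)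
  define ins where "ins = inside (path_image c')"
  define outs where "outs = outside (path_image c')"
  note JO = Jordan_inside_outside[OF sp' lp', folded ins_def outs_def]
  have opi: "open ins" and opo: "open outs" and cni: "connected ins" and cno: "connected outs"
    and bi: "bounded ins" and dio: "ins \<inter> outs = {}" and uio: "ins \<union> outs = - path_image c'"
    and fri: "frontier ins = path_image c'" and fro: "frontier outs = path_image c'"
    using JO by auto
  have cpc': "compact (path_image c')" using sp' by (simp add: compact_simple_path_image)
  have "bounded (ins \<union> path_image c')" using bi cpc' by (simp add: compact_imp_bounded)
  then obtain R where "\<forall>x \<in> ins \<union> path_image c'. norm x \<le> R" unfolding bounded_pos by blast
  then have R: "ins \<union> path_image c' \<subseteq> cball 0 R" by auto
  have cK: "compact (\<tau> ` cball 0 R)"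
    by (rule compact_continuous_image) (use cont\<tau> continuous_on_subset in auto)
  have "q \<notin> \<tau> ` cball 0 R" using \<tau>S by auto
  moreover have "open (- (\<tau> ` cball 0 R))" using cK compact_imp_closed by blast
  ultimately obtain \<delta> where "\<delta> > 0" "ball q \<delta> \<subseteq> - (\<tau> ` cball 0 R)"
    using open_contains_ball by blast
  then have \<delta>: "\<delta> > 0" "ball q \<delta> \<inter> \<tau> ` cball 0 R = {}" by auto
  have near: "p \<in> \<tau> ` outs" if "p \<in> S2" "p \<in> ball q \<delta>" "p \<noteq> q" for p
  proof -
    have "\<sigma> p \<notin> cball 0 R"
      using \<delta>(2) that \<tau>\<sigma>[of p] by (metis DiffI disjoint_iff image_eqI singletonD)
    then have "\<sigma> p \<notin> ins" "\<sigma> p \<notin> path_image c'" using R by auto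
    then have "\<sigma> p \<in> outs" using uio by (metis ComplI UnE)
    then show ?thesis using \<tau>\<sigma>[of p] that by (metis DiffI image_eqI singletonD)
  qed
  define U1 where "U1 = \<tau> ` ins"
  define U2 where "U2 = \<tau> ` outs \<union> {q}"
  have o1: "openin (top_of_set S2) U1" unfolding U1_def using openin_S2_image[OF hom opi q(1)] .
  have o2': "openin (top_of_set S2) (\<tau> ` outs)" using openin_S2_image[OF hom opo q(1)] .
  have U2eq: "U2 = \<tau> ` outs \<union> (S2 \<inter> ball q \<delta>)"
    unfolding U2_def
  proof (intro equalityI subsetI)
    fix x assume "x \<in> \<tau> ` outs \<union> {q}" then show "x \<in> \<tau> ` outs \<union> (S2 \<inter> ball q \<delta>)" using q(1) \<delta>(1) by auto
  next
    fix x assume x: "x \<in> \<tau> ` outs \<union> (S2 \<inter> ball q \<delta>)" then show "x \<in> \<tau> ` outs \<union> {q}" using near[of x] by blast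
  qed
  have o2: "openin (top_of_set S2) U2"
    unfolding U2eq using o2' by (intro openin_Un) (auto intro: openin_open_Int)
  have c1: "connected U1" unfolding U1_def
    using cni cont\<tau> connected_continuous_image continuous_on_subset by blast
  have qcl: "q \<in> closure (\<tau> ` outs)"
    unfolding closure_approachable
  proof (intro allI impI)
    fix e :: real assume "e > 0"
    obtain p where p: "p \<in> S2" "p \<noteq> q" "dist p q < min e \<delta>"
      using S2_limpt[OF q(1)] \<open>e > 0\<close> \<delta>(1) unfolding islimpt_approachable by (metis min_less_iff_conj)
    then have "p \<in> \<tau> ` outs" using near by (simp add: dist_commute)
    then show "\<exists>y\<in>\<tau> ` outs. dist y q < e" using p by force
  qed
  have c2: "connected U2"
  proof (rule connected_intermediate_closure)
    show "connected (\<tau> ` outs)" using cno cont\<tau> connected_continuous_image continuous_on_subset by blast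
  qed (use qcl U2_def closure_subset[of "\<tau> ` outs"] in auto)
  have d12: "U1 \<inter> U2 = {}"
    unfolding U1_def U2_def using dio \<tau>S \<sigma>\<tau> by (auto, metis disjoint_iff)
  have u12: "U1 \<union> U2 = S2 - ?J"
  proof
    show "U1 \<union> U2 \<subseteq> S2 - ?J"
    proof
      fix p assume "p \<in> U1 \<union> U2"
      then consider w where "w \<in> ins \<union> outs" "p = \<tau> w" | "p = q" unfolding U1_def U2_def by blast
      then show "p \<in> S2 - ?J"
      proof cases
        case 1
        then have "w \<notin> \<sigma> ` ?J" using uio pic' by auto
        then show ?thesis using 1 \<tau>S \<sigma>\<tau> by (metis DiffD1 DiffI image_eqI)
      qed (use q in auto)
    qed
    show "S2 - ?J \<subseteq> U1 \<union> U2"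
    proof
      fix p assume p: "p \<in> S2 - ?J"
      show "p \<in> U1 \<union> U2"
      proof (cases "p = q")
        case False
        have "\<sigma> p \<notin> \<sigma> ` ?J"
        proof
          assume "\<sigma> p \<in> \<sigma> ` ?J"
          then obtain z where "z \<in> ?J" "\<sigma> p = \<sigma> z" by blast
          then have "p = z" using \<tau>\<sigma>[of p] \<tau>\<sigma>[of z] Jsub p False by auto
          then show False using p \<open>z \<in> ?J\<close> by auto
        qed
        then have "\<sigma> p \<in> ins \<union> outs" using uio pic' by auto
        then show ?thesis using \<tau>\<sigma>[of p] p False unfolding U1_def U2_def by (metis DiffD1 Un_iff image_eqI singletonD Diff_iff)
      qed (simp add: U2_def)
    qed
  qed
  have cl: "\<tau> ` closure A \<subseteq> closure (\<tau> ` A)" for A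
  proof (rule image_closure_subset)
    show "continuous_on (closure A) \<tau>" using cont\<tau> continuous_on_subset by blast
    show "\<tau> ` A \<subseteq> closure (\<tau> ` A)" by (rule closure_subset)
  qed simp
  have f1: "?J \<subseteq> closure U1"
  proof
    fix z assume "z \<in> ?J"
    then have "\<sigma> z \<in> closure ins" using fri pic' frontier_def by auto
    then show "z \<in> closure U1" using cl[of ins] \<tau>\<sigma>[of z] Jsub \<open>z \<in> ?J\<close> unfolding U1_def by (metis image_subset_iff subsetD)
  qed
  have f2: "?J \<subseteq> closure U2"
  proof
    fix z assume "z \<in> ?J"
    then have "\<sigma> z \<in> closure outs" using fro pic' frontier_def by auto
    then have "z \<in> closure (\<tau> ` outs)" using cl[of outs] \<tau>\<sigma>[of z] Jsub \<open>z \<in> ?J\<close> by (metis image_subset_iff subsetD)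
    then show "z \<in> closure U2" unfolding U2_def by (meson closure_mono subsetD sup_ge1)
  qed
  show ?thesis using that o1 o2 c1 c2 d12 u12 f1 f2 by blast
qed

definition nd :: "(real^3) set \<Rightarrow> bool" where
  "nd A \<longleftrightarrow> closed A \<and> (\<forall>Q. openin (top_of_set S2) Q \<and> Q \<subseteq> A \<longrightarrow> Q = {})"

lemma nd_empty: "nd {}" by (auto simp: nd_def)

lemma nd_Un: assumes "nd A" "nd B" shows "nd (A \<union> B)"
  unfolding nd_def
proof (intro conjI allI impI)
  show "closed (A \<union> B)" using assms by (auto simp: nd_def)
  fix Q assume Q: "openin (top_of_set S2) Q \<and> Q \<subseteq> A \<union> B"
  have "closed A" using assms by (auto simp: nd_def)
  then have "openin (top_of_set S2) (Q - A)"
    using Q by (metis Diff_eq openin_Int_open open_Compl)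
  moreover have "Q - A \<subseteq> B" using Q by auto
  ultimately have "Q - A = {}" using assms(2) by (auto simp: nd_def)
  then have "Q \<subseteq> A" by auto
  then show "Q = {}" using Q assms(1) by (auto simp: nd_def)
qed

lemma nd_Union: assumes "finite F" "\<And>A. A \<in> F \<Longrightarrow> nd A" shows "nd (\<Union>F)"
  using assms by (induction F rule: finite_induct) (auto simp: nd_empty nd_Un)

lemma nd_arc:
  fixes f :: "real \<Rightarrow> real^3"
  assumes T: "compact T" and cf: "continuous_on T f" and inj: "inj_on f T" and sub: "f ` T \<subseteq> S2"
  shows "nd (f ` T)"
  unfolding nd_def
proof (intro conjI allI impI)
  show "closed (f ` T)" using T cf compact_continuous_image compact_imp_closed by blast
  fix Q assume Q: "openin (top_of_set S2) Q \<and> Q \<subseteq> f ` T"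
  show "Q = {}"
  proof (rule ccontr)
    assume "Q \<noteq> {}"
    then obtain p where p: "p \<in> Q" by blast
    then have pS: "p \<in> S2" using Q openin_imp_subset by blast
    define q where "q = - p"
    have qS: "q \<in> S2" using pS by (simp add: q_def S2_def)
    have "p - q = 2 *\<^sub>R p" by (simp add: q_def scaleR_2)
    then have dpq: "dist p q = 2" using pS by (simp add: S2_def dist_norm)
    obtain \<sigma> \<tau> where hom: "homeomorphism (S2 - {q}) (UNIV::complex set) \<sigma> \<tau>"
      using S2_chart[OF qS] by blast
    have \<tau>\<sigma>: "\<tau> (\<sigma> x) = x" if "x \<in> S2 - {q}" for x using hom that by (simp add: homeomorphism_def)
    have cont\<sigma>: "continuous_on (S2 - {q}) \<sigma>" using hom by (auto simp: homeomorphism_def)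
    define Q' where "Q' = Q \<inter> ball p 1"
    have Q'o: "openin (top_of_set S2) Q'" unfolding Q'_def using Q by (simp add: openin_Int_open)
    have pO': "p \<in> Q'" using p by (simp add: Q'_def)
    have qO': "Q' \<subseteq> S2 - {q}" using dpq Q'o openin_imp_subset by (fastforce simp: Q'_def dist_commute)
    have "openin (top_of_set (S2 - {q})) Q'" using openin_subset_trans[OF Q'o qO'] by blast
    then have "openin (top_of_set UNIV) (\<sigma> ` Q')" using homeomorphism_imp_open_map[OF hom] by blast
    then have opO': "open (\<sigma> ` Q')" by simp
    define T' where "T' = T \<inter> f -` cball p 1"
    have "closedin (top_of_set T) T'" unfolding T'_def
      using continuous_closedin_preimage[OF cf closed_cball] by (simp add: Int_commute)
    then have cT': "compact T'" using T closedin_compact by blast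
    have fT': "f ` T' \<subseteq> S2 - {q}" using sub dpq by (auto simp: T'_def dist_commute)
    have cg: "continuous_on T' (\<sigma> \<circ> f)"
    proof (rule continuous_on_compose)
      show "continuous_on T' f" using cf continuous_on_subset by (metis T'_def Int_lower1)
      show "continuous_on (f ` T') \<sigma>" using cont\<sigma> fT' continuous_on_subset by blast
    qed
    have ig: "inj_on (\<sigma> \<circ> f) T'"
    proof
      fix x y assume "x \<in> T'" "y \<in> T'" "(\<sigma> \<circ> f) x = (\<sigma> \<circ> f) y"
      then have "f x = f y" using \<tau>\<sigma> fT' by (metis comp_apply image_subset_iff)
      then show "x = y" using inj \<open>x \<in> T'\<close> \<open>y \<in> T'\<close> by (auto simp: T'_def inj_on_def)
    qed
    obtain g where "homeomorphism T' ((\<sigma> \<circ> f) ` T') (\<sigma> \<circ> f) g"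
      using homeomorphism_compact[OF cT' cg refl ig] by blast
    then have "((\<sigma> \<circ> f) ` T') homeomorphic T'" using homeomorphic_def homeomorphic_sym by blast
    then have int0: "interior ((\<sigma> \<circ> f) ` T') = {}"
      by (rule empty_interior_lowdim_gen[rotated]) simp
    have "\<sigma> ` Q' \<subseteq> (\<sigma> \<circ> f) ` T'"
    proof
      fix y assume "y \<in> \<sigma> ` Q'"
      then obtain x where x: "x \<in> Q'" "y = \<sigma> x" by blast
      then obtain t where "t \<in> T" "x = f t" using Q Q'_def by blast
      moreover have "x \<in> cball p 1" using x by (auto simp: Q'_def)
      ultimately have "t \<in> T'" by (simp add: T'_def)
      then show "y \<in> (\<sigma> \<circ> f) ` T'" using x \<open>x = f t\<close> by auto
    qed
    then have "\<sigma> ` Q' \<subseteq> interior ((\<sigma> \<circ> f) ` T')" using opO' interior_maximal by blast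
    then show False using int0 pO' by auto
  qed
qed

locale pg =
  fixes V :: "'v set" and E :: "'e set" and src tgt :: "'e \<Rightarrow> 'v"
    and pv :: "'v \<Rightarrow> real^3" and pe :: "'e \<Rightarrow> real \<Rightarrow> real^3"
  assumes graph: "is_graph V E src tgt" and emb: "is_embedding V E src tgt pv pe"
begin

abbreviation "G \<equiv> graph_image V E pv pe"
abbreviation "pim e \<equiv> path_image (pe e)"
definition eint where "eint e = pe e ` {0<..<1}"

lemma finV: "finite V" and finE: "finite E" using graph by (auto simp: is_graph_def)
lemma srcV: "e \<in> E \<Longrightarrow> src e \<in> V" and tgtV: "e \<in> E \<Longrightarrow> tgt e \<in> V"
  using graph by (auto simp: is_graph_def)
lemma deg2: "v \<in> V \<Longrightarrow> degree E src tgt v \<ge> 2" using graph by (auto simp: is_graph_def)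
lemma sp: "e \<in> E \<Longrightarrow> simple_path (pe e)" and ps: "e \<in> E \<Longrightarrow> pathstart (pe e) = pv (src e)"
  and pf: "e \<in> E \<Longrightarrow> pathfinish (pe e) = pv (tgt e)" and piS2: "e \<in> E \<Longrightarrow> pim e \<subseteq> S2"
  using emb by (auto simp: is_embedding_def)
lemma von: "e \<in> E \<Longrightarrow> v \<in> V \<Longrightarrow> pv v \<in> pim e \<Longrightarrow> v = src e \<or> v = tgt e"
  using emb by (auto simp: is_embedding_def)
lemma inter: "e \<in> E \<Longrightarrow> e' \<in> E \<Longrightarrow> e \<noteq> e' \<Longrightarrow> pim e \<inter> pim e' \<subseteq> pv ` {src e, tgt e}"
  using emb by (auto simp: is_embedding_def)
lemma injpv: "inj_on pv V" and pvS2: "pv ` V \<subseteq> S2" using emb by (auto simp: is_embedding_def)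

lemma G_eq: "G = pv ` V \<union> (\<Union>e\<in>E. pim e)"
  by (simp add: graph_image_def edges_image_def)

lemma G_sub: "G \<subseteq> S2" using pvS2 piS2 by (auto simp: G_eq)

lemma G_compact: "compact G"
proof -
  have "compact (pv ` V)" using finV by (simp add: finite_imp_compact)
  moreover have "compact (\<Union>e\<in>E. pim e)"
    using finE sp by (intro compact_UN) (auto simp: compact_simple_path_image)
  ultimately show ?thesis by (simp add: G_eq compact_Un)
qed

lemma G_closed: "closed G" using G_compact compact_imp_closed by blast

lemma pe0: "e \<in> E \<Longrightarrow> pe e 0 = pv (src e)" and pe1: "e \<in> E \<Longrightarrow> pe e 1 = pv (tgt e)"
  using ps pf by (auto simp: pathstart_def pathfinish_def)

lemma eint_ne_ends:
  assumes "e \<in> E" "0 < t" "t < 1" shows "pe e t \<noteq> pe e 0" "pe e t \<noteq> pe e 1"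
  using sp[OF assms(1)] assms(2,3) unfolding simple_path_def loop_free_def
  by (metis atLeastAtMost_iff less_eq_real_def zero_less_one less_irrefl)+

lemma pim_eq: assumes e: "e \<in> E" shows "pim e = eint e \<union> {pv (src e), pv (tgt e)}"
proof (intro equalityI subsetI)
  fix x assume "x \<in> pim e"
  then obtain t where t: "t \<in> {0..1}" "x = pe e t" by (auto simp: path_image_def)
  then consider "t = 0" | "t = 1" | "t \<in> {0<..<1}" by fastforce
  then show "x \<in> eint e \<union> {pv (src e), pv (tgt e)}" using t pe0[OF e] pe1[OF e]
    by cases (auto simp: eint_def)
next
  fix x assume "x \<in> eint e \<union> {pv (src e), pv (tgt e)}"
  moreover have "pe e 0 \<in> pim e" "pe e 1 \<in> pim e" by (auto simp: path_image_def)
  ultimately show "x \<in> pim e" using pe0[OF e] pe1[OF e] by (auto simp: eint_def path_image_def)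
qed

lemma eint_sub: "e \<in> E \<Longrightarrow> eint e \<subseteq> pim e" using pim_eq by auto

lemma eint_notends: "e \<in> E \<Longrightarrow> x \<in> eint e \<Longrightarrow> x \<noteq> pv (src e) \<and> x \<noteq> pv (tgt e)"
  unfolding eint_def using eint_ne_ends pe0 pe1 by force

lemma eint_unique: "e \<in> E \<Longrightarrow> x \<in> eint e \<Longrightarrow> e' \<in> E \<Longrightarrow> x \<in> pim e' \<Longrightarrow> e' = e"
  using inter[of e e'] eint_sub[of e] eint_notends[of e x] by blast

lemma eint_notv: "e \<in> E \<Longrightarrow> x \<in> eint e \<Longrightarrow> v \<in> V \<Longrightarrow> pv v \<noteq> x"
  using von[of e v] eint_sub[of e] eint_notends[of e x] by blast

lemma G_cases: "y \<in> G \<Longrightarrow> (\<exists>v\<in>V. y = pv v) \<or> (\<exists>e\<in>E. y \<in> eint e)"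
  using pim_eq srcV tgtV by (auto simp: G_eq)

lemma eint_local:
  assumes e: "e \<in> E" and x: "x \<in> eint e"
  shows "\<exists>r>0. ball x r \<inter> G \<subseteq> eint e"
proof -
  define K where "K = pv ` V \<union> (\<Union>e'\<in>E - {e}. pim e')"
  have "compact K" unfolding K_def using finV finE sp
    by (intro compact_Un compact_UN) (auto simp: finite_imp_compact compact_simple_path_image)
  moreover have "x \<notin> K" unfolding K_def using eint_notv[OF e x] eint_unique[OF e x] by blast
  ultimately obtain r where r: "r > 0" "ball x r \<subseteq> - K"
    using compact_imp_closed open_contains_ball by (metis open_Compl ComplI)
  have "ball x r \<inter> G \<subseteq> eint e"
  proof
    fix y assume y: "y \<in> ball x r \<inter> G"
    then have "y \<notin> K" using r by auto
    then have "y \<in> pim e" using y unfolding K_def G_eq by auto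
    moreover have "y \<noteq> pv (src e)" "y \<noteq> pv (tgt e)" using \<open>y \<notin> K\<close> srcV[OF e] tgtV[OF e] by (auto simp: K_def)
    ultimately show "y \<in> eint e" using pim_eq[OF e] by auto
  qed
  then show ?thesis using r by blast
qed

lemma nd_edge: assumes "e \<in> E" shows "nd (pim e)"
proof -
  have eq: "{0..1::real} = {0..1/2} \<union> {1/2..1}" by auto
  have split: "pim e = pe e ` {0..1/2} \<union> pe e ` {1/2..1}"
    unfolding path_image_def by (subst eq) (rule image_Un)
  have cont: "continuous_on {0..1} (pe e)" using sp[OF assms] simple_path_imp_path path_def by blast
  have lf: "loop_free (pe e)" using sp[OF assms] simple_path_def by blast
  have "nd (pe e ` {0..1/2})"
  proof (rule nd_arc)
    show "continuous_on {0..1/2} (pe e)" using cont by (rule continuous_on_subset) auto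
    show "inj_on (pe e) {0..1/2}"
    proof (rule inj_onI)
      fix x y assume xy: "x \<in> {0..1/2}" "y \<in> {0..1/2}" "pe e x = pe e y"
      then have "x \<in> {0..1}" "y \<in> {0..1}" by auto
      then have "x = y \<or> x = 0 \<and> y = 1 \<or> x = 1 \<and> y = 0" using lf xy(3) unfolding loop_free_def by blast
      then show "x = y" using xy by auto
    qed
    show "pe e ` {0..1/2} \<subseteq> S2" using piS2[OF assms] split by auto
  qed simp
  moreover have "nd (pe e ` {1/2..1})"
  proof (rule nd_arc)
    show "continuous_on {1/2..1} (pe e)" using cont by (rule continuous_on_subset) auto
    show "inj_on (pe e) {1/2..1}"
    proof (rule inj_onI)
      fix x y assume xy: "x \<in> {1/2..1}" "y \<in> {1/2..1}" "pe e x = pe e y"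
      then have "x \<in> {0..1}" "y \<in> {0..1}" by auto
      then have "x = y \<or> x = 0 \<and> y = 1 \<or> x = 1 \<and> y = 0" using lf xy(3) unfolding loop_free_def by blast
      then show "x = y" using xy by auto
    qed
    show "pe e ` {1/2..1} \<subseteq> S2" using piS2[OF assms] split by auto
  qed simp
  ultimately show ?thesis using split nd_Un by simp
qed

lemma nd_G: "nd G"
proof -
  have "nd (\<Union>v\<in>V. {pv v})"
  proof (rule nd_Union)
    fix A assume "A \<in> (\<lambda>v. {pv v}) ` V"
    then obtain v where v: "v \<in> V" "A = {pv v}" by blast
    have "nd ((\<lambda>_. pv v) ` {0::real})"
      by (rule nd_arc) (use v pvS2 in auto)
    then show "nd A" using v by simp
  qed (use finV in auto)
  moreover have "nd (\<Union>e\<in>E. pim e)" by (rule nd_Union) (use finE nd_edge in auto)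
  ultimately show ?thesis unfolding G_eq by (metis nd_Un UNION_singleton_eq_range image_image)
qed

lemma G_dense:
  assumes "openin (top_of_set S2) U" "U \<noteq> {}" shows "\<exists>y\<in>U. y \<notin> G"
  using nd_G assms unfolding nd_def by blast

end

context pg begin

abbreviation "FS \<equiv> faces V E pv pe"

lemma S2G_openin: "openin (top_of_set S2) (S2 - G)"
  using G_closed by (metis Diff_eq openin_Int_open open_Compl openin_subtopology_self)

lemma face_openin: "F \<in> FS \<Longrightarrow> openin (top_of_set S2) F"
proof -
  assume F: "F \<in> FS"
  have "locally connected S2" unfolding S2_def by (rule locally_connected_sphere)
  then have "locally connected (S2 - G)"
    using locally_open_subset S2G_openin by blast
  then have "openin (top_of_set (S2 - G)) F"
    using openin_components_locally_connected F by (simp add: faces_def)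
  then show ?thesis using S2G_openin openin_trans by blast
qed

lemma face_sub: "F \<in> FS \<Longrightarrow> F \<subseteq> S2 - G" by (simp add: faces_def in_components_subset)
lemma face_conn: "F \<in> FS \<Longrightarrow> connected F" by (simp add: faces_def in_components_connected)
lemma face_ne: "F \<in> FS \<Longrightarrow> F \<noteq> {}" by (simp add: faces_def in_components_nonempty)
lemma face_closure: "F \<in> FS \<Longrightarrow> closure F \<subseteq> S2"
  using face_sub closure_minimal S2_closed by (metis Diff_subset subset_trans)
lemma face_pt: assumes "y \<in> S2 - G" shows "\<exists>F\<in>FS. y \<in> F"
proof -
  have "y \<in> \<Union>(components (S2 - G))" using assms by (simp only: Union_components)
  then show ?thesis unfolding faces_def by (meson UnionE)
qed
lemma face_eq: "F \<in> FS \<Longrightarrow> F' \<in> FS \<Longrightarrow> F \<inter> F' \<noteq> {} \<Longrightarrow> F = F'"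
  by (simp add: faces_def components_eq)
lemma face_max: "F \<in> FS \<Longrightarrow> connected X \<Longrightarrow> X \<subseteq> S2 - G \<Longrightarrow> F \<inter> X \<noteq> {} \<Longrightarrow> X \<subseteq> F"
  unfolding faces_def by (meson components_maximal)

lemma openin_closure_meet:
  assumes "openin (top_of_set S2) U" "y \<in> U" "y \<in> closure A" "A \<subseteq> S2"
  shows "U \<inter> A \<noteq> {}"
proof -
  obtain Q where Q: "open Q" "U = S2 \<inter> Q" using assms(1) openin_open by blast
  then have "Q \<inter> A \<noteq> {}" using assms(2,3) open_Int_closure_eq_empty by (metis IntD2 disjoint_iff)
  then show ?thesis using Q assms(4) by blast
qed

lemma face_closure_pt: "F \<in> FS \<Longrightarrow> y \<in> closure F \<Longrightarrow> y \<in> S2 \<Longrightarrow> y \<notin> G \<Longrightarrow> y \<in> F"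
proof -
  assume F: "F \<in> FS" and y: "y \<in> closure F" "y \<in> S2" "y \<notin> G"
  obtain F' where F': "F' \<in> FS" "y \<in> F'" using face_pt y by blast
  have "F' \<inter> F \<noteq> {}"
    using openin_closure_meet[OF face_openin[OF F'(1)] F'(2) y(1)] face_sub[OF F] by blast
  then show "y \<in> F" using face_eq[OF F'(1) F] F' by simp
qed

lemma fb_sub_G: "F \<in> FS \<Longrightarrow> face_boundary F \<subseteq> G"
  using face_closure_pt face_closure unfolding face_boundary_def by blast

lemma fb_closure: "F \<in> FS \<Longrightarrow> face_boundary F \<subseteq> closure F"
  unfolding face_boundary_def by blast

lemma closure_fb: "F \<in> FS \<Longrightarrow> closure F = F \<union> face_boundary F"
  unfolding face_boundary_def using closure_subset by blast

end

lemma exp_i_inj: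
  assumes eq: "exp (\<i> * of_real s1) = exp (\<i> * of_real s2)" and d: "\<bar>s1 - s2\<bar> < 2*pi"
  shows "s1 = s2"
proof -
  obtain n::int where n: "\<i> * of_real s1 = \<i> * of_real s2 + of_real (of_int (2*n) * pi) * \<i>"
    using eq unfolding exp_eq by blast
  then have "\<i> * of_real s1 = \<i> * of_real (s2 + of_int (2*n) * pi)"
    by (simp add: algebra_simps)
  then have "(of_real s1 :: complex) = of_real (s2 + of_int (2*n) * pi)" by simp
  then have s: "s1 = s2 + of_int (2*n) * pi" using of_real_eq_iff by blast
  then have "\<bar>of_int (2*n) * pi\<bar> < 2 * pi" using d by simp
  then have "\<bar>real_of_int n\<bar> * (2*pi) < 1 * (2 * pi)" by (simp add: abs_mult)
  then have "\<bar>real_of_int n\<bar> < 1" using pi_gt_zero by (meson mult_less_cancel_right_pos zero_less_mult_iff zero_less_numeral)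
  then have "n = 0" by linarith
  then show ?thesis using s by simp
qed

context pg begin

lemma CL:
  assumes J: "J \<subseteq> G" "J homeomorphic sphere (0::complex) 1" and e: "e \<in> E" and ne: "eint e \<inter> J \<noteq> {}"
  shows "pim e \<subseteq> J"
proof -
  obtain \<phi> \<psi> where hom: "homeomorphism (sphere (0::complex) 1) J \<phi> \<psi>"
    using J(2) homeomorphic_sym unfolding homeomorphic_def by blast
  have \<phi>\<psi>: "\<phi> (\<psi> y) = y" if "y \<in> J" for y using hom that by (simp add: homeomorphism_def)
  have \<psi>S: "\<psi> y \<in> sphere 0 1" if "y \<in> J" for y using hom that unfolding homeomorphism_def by blast
  have \<phi>J: "\<phi> z \<in> J" if "z \<in> sphere 0 1" for z using hom that unfolding homeomorphism_def by blast
  have \<psi>\<phi>: "\<psi> (\<phi> z) = z" if "z \<in> sphere 0 1" for z using hom that by (simp add: homeomorphism_def)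
  have cont\<phi>: "continuous_on (sphere 0 1) \<phi>" using hom by (simp add: homeomorphism_def)
  have "compact J" using hom compact_continuous_image[OF cont\<phi>] by (simp add: homeomorphism_def)
  then have Jcl: "closed J" by (simp add: compact_imp_closed)
  have cont: "continuous_on {0..1} (pe e)" using sp[OF e] simple_path_imp_path path_def by blast
  have lf: "loop_free (pe e)" using sp[OF e] simple_path_def by blast
  define T where "T = {0<..<1} \<inter> pe e -` J"
  have Tcl: "closedin (top_of_set {0<..<1}) T"
    unfolding T_def by (rule continuous_closedin_preimage[OF continuous_on_subset[OF cont] Jcl]) auto
  have Topen: "open T"
    unfolding open_contains_ball
  proof
    fix t assume tT: "t \<in> T"
    then have t01: "0 < t" "t < 1" and yJ: "pe e t \<in> J" by (auto simp: T_def)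
    define y where "y = pe e t"
    have yeint: "y \<in> eint e" using t01 by (auto simp: eint_def y_def)
    obtain r1 where r1: "r1 > 0" "ball y r1 \<inter> G \<subseteq> eint e" using eint_local[OF e yeint] by blast
    define a where "a = t/2"
    define b where "b = (t+1)/2"
    have ab: "0 < a" "a < t" "t < b" "b < 1" using t01 by (auto simp: a_def b_def)
    define K0 where "K0 = pe e ` ({0..a} \<union> {b..1})"
    have cK0: "compact K0" unfolding K0_def
      by (rule compact_continuous_image[OF continuous_on_subset[OF cont]]) (use ab in auto)
    have yK0: "y \<notin> K0"
    proof
      assume "y \<in> K0"
      then obtain s where s0: "s \<in> {0..a} \<union> {b..1}" "y = pe e s" unfolding K0_def by blast
      then have s: "s \<in> {0..a} \<union> {b..1}" "pe e s = pe e t" by (auto simp: y_def)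
      then have "s \<in> {0..1}" "t \<in> {0..1}" using ab by auto
      then have "s = t \<or> s = 0 \<and> t = 1 \<or> s = 1 \<and> t = 0" using lf s(2) unfolding loop_free_def by blast
      then show False using s(1) ab by auto
    qed
    obtain r2 where r2: "r2 > 0" "ball y r2 \<subseteq> - K0"
      using cK0 yK0 compact_imp_closed open_contains_ball by (metis open_Compl ComplI)
    define r where "r = min r1 r2"
    have r: "r > 0" using r1 r2 by (simp add: r_def)
    have near: "ball y r \<inter> J \<subseteq> pe e ` {a..b}"
    proof
      fix z assume z: "z \<in> ball y r \<inter> J"
      then have "z \<in> eint e" using r1 J(1) by (auto simp: r_def)
      then obtain s where s: "s \<in> {0<..<1}" "z = pe e s" by (auto simp: eint_def)
      have "z \<notin> K0" using z r2 by (auto simp: r_def)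
      then have "s \<in> {a..b}" using s by (auto simp: K0_def)
      then show "z \<in> pe e ` {a..b}" using s by blast
    qed
    have injab: "inj_on (pe e) {a..b}"
    proof (rule inj_onI)
      fix x z assume xz: "x \<in> {a..b}" "z \<in> {a..b}" "pe e x = pe e z"
      then have "x \<in> {0..1}" "z \<in> {0..1}" using ab by auto
      then have "x = z \<or> x = 0 \<and> z = 1 \<or> x = 1 \<and> z = 0" using lf xz(3) unfolding loop_free_def by blast
      then show "x = z" using xz ab by auto
    qed
    obtain g where g: "homeomorphism {a..b} (pe e ` {a..b}) (pe e) g"
      using homeomorphism_compact[OF compact_Icc continuous_on_subset[OF cont] refl injab] ab by auto
    have gpe: "g (pe e s) = s" if "s \<in> {a..b}" for s using g that by (simp add: homeomorphism_def)
    have peg: "pe e (g z) = z" if "z \<in> pe e ` {a..b}" for z using g that unfolding homeomorphism_def by blast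
    have gab: "g z \<in> {a..b}" if "z \<in> pe e ` {a..b}" for z using g that unfolding homeomorphism_def by blast
    have contg: "continuous_on (pe e ` {a..b}) g" using g by (simp add: homeomorphism_def)
    define w where "w = \<psi> y"
    have w: "w \<in> sphere 0 1" "\<phi> w = y" using \<psi>S \<phi>\<psi> yJ by (auto simp: w_def y_def)
    define \<rho> where "\<rho> = (\<lambda>s::real. \<phi> (w * exp (\<i> * of_real s)))"
    have wexp: "w * exp (\<i> * of_real s) \<in> sphere 0 1" for s
      using w(1) by (simp add: norm_mult norm_exp_i_times)
    have wexp': "norm (w * exp (\<i> * of_real s)) = 1" for s
      using w(1) by (simp add: norm_mult norm_exp_i_times)
    have cont\<rho>: "continuous_on UNIV \<rho>"
      unfolding \<rho>_def
      by (rule continuous_on_compose2[OF cont\<phi>]) (auto intro!: continuous_intros simp: wexp')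
    have "open (\<rho> -` ball y r)" using open_vimage[OF open_ball cont\<rho>] .
    moreover have "0 \<in> \<rho> -` ball y r" using w r by (simp add: \<rho>_def)
    ultimately obtain \<delta>0 where \<delta>0: "\<delta>0 > 0" "ball 0 \<delta>0 \<subseteq> \<rho> -` ball y r"
      using open_contains_ball by blast
    define \<delta> where "\<delta> = min \<delta>0 pi"
    have \<delta>: "\<delta> > 0" "\<delta> \<le> pi" using \<delta>0 pi_gt_zero by (auto simp: \<delta>_def)
    have \<rho>in: "\<rho> s \<in> pe e ` {a..b}" if "s \<in> ball 0 \<delta>" for s
    proof -
      have "\<rho> s \<in> ball y r" using \<delta>0 that by (auto simp: \<delta>_def)
      moreover have "\<rho> s \<in> J" using \<phi>J wexp by (simp add: \<rho>_def)
      ultimately show ?thesis using near by blast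
    qed
    define h where "h = g \<circ> \<rho>"
    have conth: "continuous_on (ball 0 \<delta>) h"
      unfolding h_def
      by (rule continuous_on_compose[OF continuous_on_subset[OF cont\<rho>] continuous_on_subset[OF contg]])
         (use \<rho>in in auto)
    have injh: "inj_on h (ball 0 \<delta>)"
    proof (rule inj_onI)
      fix s1 s2 assume s: "s1 \<in> ball 0 \<delta>" "s2 \<in> ball 0 \<delta>" "h s1 = h s2"
      then have "\<rho> s1 = \<rho> s2" using peg \<rho>in unfolding h_def by (metis comp_apply)
      then have "w * exp (\<i> * of_real s1) = w * exp (\<i> * of_real s2)"
        using \<psi>\<phi> wexp unfolding \<rho>_def by metis
      moreover have "w \<noteq> 0" using w(1) by auto
      ultimately have "exp (\<i> * of_real s1) = exp (\<i> * of_real s2)" by simp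
      moreover have "\<bar>s1 - s2\<bar> < 2*pi" using s \<delta> by (auto simp: dist_real_def)
      ultimately show "s1 = s2" by (rule exp_i_inj)
    qed
    have oh: "open (h ` ball 0 \<delta>)" by (rule invariance_of_domain[OF conth open_ball injh])
    have "h 0 = t" using w gpe ab by (simp add: h_def \<rho>_def y_def)
    then have th: "t \<in> h ` ball 0 \<delta>" using \<delta> by (metis centre_in_ball imageI)
    have hT: "h ` ball 0 \<delta> \<subseteq> T"
    proof
      fix x assume "x \<in> h ` ball 0 \<delta>"
      then obtain s where s: "s \<in> ball 0 \<delta>" "x = h s" by blast
      then have "x \<in> {a..b}" using gab \<rho>in by (simp add: h_def)
      moreover have "pe e x = \<rho> s" using s peg \<rho>in by (simp add: h_def)
      moreover have "\<rho> s \<in> J" using \<phi>J wexp by (simp add: \<rho>_def)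
      ultimately show "x \<in> T" using ab by (auto simp: T_def)
    qed
    obtain \<epsilon> where "\<epsilon> > 0" "ball t \<epsilon> \<subseteq> h ` ball 0 \<delta>" using oh th open_contains_ball by blast
    then show "\<exists>\<epsilon>>0. ball t \<epsilon> \<subseteq> T" using hT by blast
  qed
  have "T \<noteq> {}" using ne by (auto simp: T_def eint_def)
  moreover have "openin (top_of_set {0<..<1}) T" by (rule open_subset[OF _ Topen]) (auto simp: T_def)
  ultimately have "T = {0<..<1}" using Tcl connected_Ioo[of 0 1] unfolding connected_clopen by blast
  then have "pe e ` {0<..<1} \<subseteq> J" by (auto simp: T_def)
  moreover have "pe e ` closure {0<..<1} \<subseteq> closure (pe e ` {0<..<1})"
  proof (rule image_closure_subset)
    show "continuous_on (closure {0<..<1}) (pe e)" using cont by simp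
    show "pe e ` {0<..<1} \<subseteq> closure (pe e ` {0<..<1})" by (rule closure_subset)
  qed simp
  ultimately show ?thesis using Jcl by (simp add: path_image_def closure_minimal) (meson closure_minimal order_trans)
qed

end

context pg begin

definition wk :: "'e set \<Rightarrow> 'v list \<Rightarrow> 'e list \<Rightarrow> bool" where
  "wk H vs es \<longleftrightarrow> length vs = Suc (length es) \<and>
     (\<forall>i<length es. es!i \<in> H \<and> {src (es!i), tgt (es!i)} = {vs!i, vs!Suc i})"

lemma wk_Cons: "wk H (v # vs) (e # es) \<longleftrightarrow> e \<in> H \<and> vs \<noteq> [] \<and> {src e, tgt e} = {v, hd vs} \<and> wk H vs es"
proof
  assume w: "wk H (v # vs) (e # es)"
  then have "vs \<noteq> []" "length vs = Suc (length es)" by (auto simp: wk_def)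
  moreover have "e \<in> H \<and> {src e, tgt e} = {v, hd vs}" using w \<open>vs \<noteq> []\<close>
    unfolding wk_def by (metis hd_conv_nth length_Cons nth_Cons_0 nth_Cons_Suc zero_less_Suc)
  moreover have "es!i \<in> H \<and> {src (es!i), tgt (es!i)} = {vs!i, vs!Suc i}" if "i < length es" for i
    using w that unfolding wk_def by (metis Suc_less_eq length_Cons nth_Cons_Suc)
  ultimately show "e \<in> H \<and> vs \<noteq> [] \<and> {src e, tgt e} = {v, hd vs} \<and> wk H vs es"
    by (simp add: wk_def)
next
  assume a: "e \<in> H \<and> vs \<noteq> [] \<and> {src e, tgt e} = {v, hd vs} \<and> wk H vs es"
  show "wk H (v # vs) (e # es)"
    unfolding wk_def
  proof (rule conjI; (intro allI impI)?)
    show "length (v # vs) = Suc (length (e # es))" using a by (simp add: wk_def)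
    fix i assume i: "i < length (e # es)"
    show "(e # es) ! i \<in> H \<and> {src ((e # es) ! i), tgt ((e # es) ! i)} = {(v # vs) ! i, (v # vs) ! Suc i}"
    proof (cases i)
      case 0 then show ?thesis using a by (simp add: hd_conv_nth)
    next
      case (Suc j) then show ?thesis using a i by (simp add: wk_def)
    qed
  qed
qed

lemma wk_Nil: "wk H vs [] \<longleftrightarrow> length vs = 1" by (simp add: wk_def)

lemma wk_mono: "H \<subseteq> H' \<Longrightarrow> wk H vs es \<Longrightarrow> wk H' vs es"
  unfolding wk_def by blast

lemma wk_rev: assumes "wk H vs es" shows "wk H (rev vs) (rev es)"
  unfolding wk_def
proof (rule conjI; (intro allI impI)?)
  show "length (rev vs) = Suc (length (rev es))" using assms by (simp add: wk_def)
  fix i assume i: "i < length (rev es)"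
  define j where "j = length es - Suc i"
  have j: "j < length es" using i by (simp add: j_def)
  have "rev es ! i = es ! j" using i by (simp add: rev_nth j_def)
  moreover have "rev vs ! i = vs ! Suc j" "rev vs ! Suc i = vs ! j"
    using i assms by (auto simp: rev_nth j_def wk_def Suc_diff_Suc)
  ultimately show "rev es ! i \<in> H \<and> {src (rev es ! i), tgt (rev es ! i)} = {rev vs ! i, rev vs ! Suc i}"
    using assms j unfolding wk_def by (simp add: insert_commute)
qed

lemma wk_snoc:
  assumes "wk H vs es" "f \<in> H" "{src f, tgt f} = {last vs, w}"
  shows "wk H (vs @ [w]) (es @ [f])"
  unfolding wk_def
proof (rule conjI; (intro allI impI)?)
  show "length (vs @ [w]) = Suc (length (es @ [f]))" using assms by (simp add: wk_def)
  fix i assume i: "i < length (es @ [f])"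
  have lv: "length vs = Suc (length es)" using assms by (simp add: wk_def)
  show "(es @ [f]) ! i \<in> H \<and> {src ((es @ [f]) ! i), tgt ((es @ [f]) ! i)} = {(vs @ [w]) ! i, (vs @ [w]) ! Suc i}"
  proof (cases "i < length es")
    case True then show ?thesis using assms lv by (simp add: wk_def nth_append)
  next
    case False
    then have "i = length es" using i by simp
    moreover have "vs \<noteq> []" using lv by auto
    ultimately show ?thesis using assms lv by (simp add: nth_append last_conv_nth)
  qed
qed

lemma wk_drop: assumes "wk H vs es" "i \<le> length es" shows "wk H (drop i vs) (drop i es)"
  using assms unfolding wk_def by (auto simp: add.commute)

lemma wk_setv: assumes "wk H vs es" "e \<in> set es" shows "src e \<in> set vs" "tgt e \<in> set vs"
proof -
  obtain i where i: "i < length es" "e = es!i" using assms(2) by (metis in_set_conv_nth)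
  then have "{src e, tgt e} = {vs!i, vs!Suc i}" "Suc i < length vs" using assms(1) by (auto simp: wk_def)
  then show "src e \<in> set vs" "tgt e \<in> set vs" by (metis insertCI insertE nth_mem singletonD Suc_lessD)+
qed

lemma wk_H: "wk H vs es \<Longrightarrow> set es \<subseteq> H"
  unfolding wk_def by (metis in_set_conv_nth subsetI)

lemma comb:
  assumes HE: "H \<subseteq> E" and Hne: "H \<noteq> {}"
    and deg: "\<And>v. v \<in> V \<Longrightarrow> v \<notin> B \<Longrightarrow> (\<exists>e\<in>H. src e = v \<or> tgt e = v) \<Longrightarrow>
               2 \<le> card {e\<in>H. src e = v} + card {e\<in>H. tgt e = v}"
  shows "(\<exists>vs es. wk H vs es \<and> es \<noteq> [] \<and> hd vs = last vs \<and> distinct (tl vs) \<and> distinct es)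
       \<or> (\<exists>vs es. wk H vs es \<and> es \<noteq> [] \<and> distinct vs \<and> distinct es \<and> hd vs \<in> B \<and> last vs \<in> B
              \<and> (\<forall>x\<in>set (butlast (tl vs)). x \<notin> B))"
   (is "?A \<or> ?B")
proof (rule ccontr)
  assume nAB: "\<not> (?A \<or> ?B)"
  define P where "P = (\<lambda>(vs, es). wk H vs es \<and> es \<noteq> [] \<and> distinct vs \<and> distinct es \<and> set vs \<subseteq> V
                        \<and> (\<forall>x\<in>set (tl vs). x \<notin> B))"
  have finH: "finite H" using finE HE finite_subset by blast
  obtain e where e: "e \<in> H" using Hne by blast
  have eV: "src e \<in> V" "tgt e \<in> V" using e HE srcV tgtV by auto
  have "\<exists>p. P p"
  proof (cases "src e = tgt e")
    case True
    have "wk H [src e, src e] [e]" using e True by (simp add: wk_def)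
    then have ?A by (intro exI[of _ "[src e, src e]"] exI[of _ "[e]"]) simp
    then show ?thesis using nAB by blast
  next
    case False
    show ?thesis
    proof (cases "tgt e \<in> B")
      case True
      show ?thesis
      proof (cases "src e \<in> B")
        case True
        have "wk H [src e, tgt e] [e]" using e by (simp add: wk_def)
        then have ?B using \<open>tgt e \<in> B\<close> True False by (intro exI[of _ "[src e, tgt e]"] exI[of _ "[e]"]) simp
        then show ?thesis using nAB by blast
      next
        case False
        have "wk H [tgt e, src e] [e]" using e by (simp add: wk_def insert_commute)
        then have "P ([tgt e, src e], [e])" using False \<open>src e \<noteq> tgt e\<close> eV by (simp add: P_def)
        then show ?thesis by blast
      qed
    next
      case False
      have "wk H [src e, tgt e] [e]" using e by (simp add: wk_def)
      then have "P ([src e, tgt e], [e])" using False \<open>src e \<noteq> tgt e\<close> eV by (simp add: P_def)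
      then show ?thesis by blast
    qed
  qed
  then obtain p0 where p0: "P p0" by blast
  have bound: "length (fst p) < Suc (card V)" if "P p" for p
  proof -
    obtain vs es where "p = (vs, es)" by fastforce
    then have "distinct vs" "set vs \<subseteq> V" using that by (auto simp: P_def)
    then have "card (set vs) \<le> card V" using finV card_mono by blast
    then show ?thesis using \<open>distinct vs\<close> \<open>p = (vs, es)\<close> by (simp add: distinct_card)
  qed
  obtain p where Pp: "P p" and maxp: "\<And>p'. P p' \<Longrightarrow> length (fst p') \<le> length (fst p)"
    using ex_has_greatest_nat[of P p0 "\<lambda>p. length (fst p)" "Suc (card V)"] p0 bound by blast
  obtain vs es where p: "p = (vs, es)" by fastforce
  have w: "wk H vs es" and esne: "es \<noteq> []" and dv: "distinct vs" and de: "distinct es"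
    and sV: "set vs \<subseteq> V" and tB: "\<forall>x\<in>set (tl vs). x \<notin> B"
    using Pp p by (auto simp: P_def)
  define n where "n = length es"
  have lv: "length vs = Suc n" using w by (simp add: wk_def n_def)
  have n1: "n \<ge> 1" using esne by (simp add: n_def Suc_le_eq)
  define x where "x = last vs"
  have vsne0: "vs \<noteq> []" using lv by auto
  have xn: "x = vs ! n" using lv by (simp add: x_def last_conv_nth[OF vsne0])
  have "tl vs \<noteq> []" using lv n1 by (metis One_nat_def Suc_le_length_iff le_add2 length_tl list.size(3) plus_1_eq_Suc diff_Suc_1 not_one_le_zero)
  then have "x \<in> set (tl vs)" unfolding x_def by (metis last_in_set last_tl)
  then have xB: "x \<notin> B" using tB by blast
  have xV: "x \<in> V" using sV lv by (simp add: xn subset_iff)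
  define ek where "ek = es ! (n - 1)"
  have "n - 1 < length es" using n1 by (simp add: n_def)
  then have ek0: "es!(n-1) \<in> H \<and> {src (es!(n-1)), tgt (es!(n-1))} = {vs!(n-1), vs!Suc (n-1)}"
    using w by (simp add: wk_def)
  have "Suc (n-1) = n" using n1 by simp
  then have ekH: "ek \<in> H" and ekends: "{src ek, tgt ek} = {vs ! (n-1), x}"
    using ek0 by (simp_all add: ek_def xn)
  have vne: "vs ! (n-1) \<noteq> x"
    using dv lv n1 unfolding xn by (simp add: nth_eq_iff_index_eq)
  have "2 \<le> card {e\<in>H. src e = x} + card {e\<in>H. tgt e = x}"
  proof (rule deg[OF xV xB])
    have "src ek = x \<or> tgt ek = x" using ekends by (metis doubleton_eq_iff)
    then show "\<exists>e\<in>H. src e = x \<or> tgt e = x" using ekH by blast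
  qed
  have "\<exists>f\<in>H. f \<noteq> ek \<and> (src f = x \<or> tgt f = x)"
  proof (rule ccontr)
    assume "\<not> ?thesis"
    then have s1: "{e\<in>H. src e = x} \<subseteq> {ek} \<inter> {e. src e = x}" and s2: "{e\<in>H. tgt e = x} \<subseteq> {ek} \<inter> {e. tgt e = x}"
      by auto
    have "card {e\<in>H. src e = x} + card {e\<in>H. tgt e = x} \<le> card ({ek} \<inter> {e. src e = x}) + card ({ek} \<inter> {e. tgt e = x})"
      using s1 s2 by (intro add_mono card_mono) auto
    also have "\<dots> \<le> 1" using ekends vne by (cases "src ek = x") (auto simp: doubleton_eq_iff)
    finally show False using \<open>2 \<le> _\<close> by simp
  qed
  then obtain f where fH: "f \<in> H" and fek: "f \<noteq> ek" and fx: "src f = x \<or> tgt f = x" by blast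
  define w' where "w' = (if src f = x then tgt f else src f)"
  have fw: "{src f, tgt f} = {x, w'}" using fx by (auto simp: w'_def)
  have w'V: "w' \<in> V" using fH HE srcV tgtV by (auto simp: w'_def)
  have fnes: "f \<notin> set es"
  proof
    assume "f \<in> set es"
    then obtain j where j: "j < n" "f = es ! j" by (metis in_set_conv_nth n_def)
    then have "{src f, tgt f} = {vs!j, vs!Suc j}" using w by (simp add: wk_def n_def)
    then have "x = vs!j \<or> x = vs!Suc j" using fw by auto
    then have "n = j \<or> n = Suc j" using dv lv j unfolding xn by (auto simp: nth_eq_iff_index_eq)
    then have "j = n - 1" using j by auto
    then show False using j fek by (simp add: ek_def)
  qed
  have lastvs: "last vs = x" by (simp add: x_def)
  have vsne: "vs \<noteq> []" using lv by auto
  show False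
  proof (cases "w' \<in> set vs")
    case True
    then obtain i where i: "i < length vs" "vs ! i = w'" by (metis in_set_conv_nth)
    define vs' where "vs' = drop i vs @ [w']"
    define es' where "es' = drop i es @ [f]"
    have "wk H (drop i vs) (drop i es)" using wk_drop[OF w] i lv by (simp add: n_def)
    moreover have "last (drop i vs) = x" using i by (simp add: last_drop lastvs)
    ultimately have "wk H vs' es'" unfolding vs'_def es'_def using wk_snoc fH fw by metis
    moreover have "es' \<noteq> []" by (simp add: es'_def)
    moreover have "hd vs' = last vs'" using i by (simp add: vs'_def hd_drop_conv_nth)
    moreover have "distinct (tl vs')"
    proof -
      have "tl vs' = drop (Suc i) vs @ [w']" using i by (simp add: vs'_def drop_Suc tl_drop)
      moreover have "w' \<notin> set (drop (Suc i) vs)"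
      proof
        assume "w' \<in> set (drop (Suc i) vs)"
        then obtain k where k: "k < length (drop (Suc i) vs)" "drop (Suc i) vs ! k = w'" by (metis in_set_conv_nth)
        then have eq: "vs ! (Suc i + k) = vs ! i" using i by simp
        have "Suc i + k < length vs" using k by simp
        then have "Suc i + k = i" using nth_eq_iff_index_eq[OF dv _ i(1)] eq by blast
        then show False by simp
      qed
      ultimately show ?thesis using dv by (simp add: distinct_drop)
    qed
    moreover have "distinct es'" using de fnes by (auto simp: es'_def distinct_drop dest: in_set_dropD)
    ultimately have ?A by blast
    then show False using nAB by blast
  next
    case False
    have w2: "wk H (vs @ [w']) (es @ [f])" using wk_snoc[OF w fH] fw lastvs by simp
    have d2: "distinct (vs @ [w'])" "distinct (es @ [f])" using dv de False fnes by auto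
    show False
    proof (cases "w' \<in> B")
      case wB: True
      show False
      proof (cases "hd vs \<in> B")
        case True
        have "butlast (tl (vs @ [w'])) = tl vs" using vsne by (simp add: tl_append2)
        then have ?B using w2 d2 wB True tB vsne
          by (intro exI[of _ "vs @ [w']"] exI[of _ "es @ [f]"]) (simp add: hd_append)
        then show False using nAB by blast
      next
        case hB: False
        have "P (rev (vs @ [w']), rev (es @ [f]))"
          unfolding P_def using wk_rev[OF w2] d2 sV w'V tB hB vsne
          by (simp, metis list.collapse set_ConsD)
        then have "length (rev (vs @ [w'])) \<le> length vs" using maxp p by fastforce
        then show False by simp
      qed
    next
      case False
      have "P (vs @ [w'], es @ [f])"
        unfolding P_def using w2 d2 sV w'V tB False vsne by (simp add: tl_append2)
      then have "length (vs @ [w']) \<le> length vs" using maxp p by fastforce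
      then show False by simp
    qed
  qed
qed

end

context pg begin

definition op :: "'e \<Rightarrow> 'v \<Rightarrow> real \<Rightarrow> real^3" where
  "op e v = (if src e = v then pe e else reversepath (pe e))"

lemma op_props:
  assumes e: "e \<in> E" and ends: "{src e, tgt e} = {v, u}"
  shows "pathstart (op e v) = pv v" "pathfinish (op e v) = pv u" "path_image (op e v) = pim e"
    "simple_path (op e v)"
proof -
  have c: "(src e = v \<and> tgt e = u) \<or> (src e \<noteq> v \<and> src e = u \<and> tgt e = v)"
    using ends by (auto simp: doubleton_eq_iff)
  then show "pathstart (op e v) = pv v" "pathfinish (op e v) = pv u"
    using ps[OF e] pf[OF e] by (auto simp: op_def)
  show "path_image (op e v) = pim e" by (simp add: op_def)
  show "simple_path (op e v)" using sp[OF e] by (simp add: op_def simple_path_reversepath)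
qed

lemma op_arc:
  assumes e: "e \<in> E" and ends: "{src e, tgt e} = {v, u}" and vu: "v \<noteq> u"
  shows "arc (op e v)"
proof -
  have "v \<in> V" "u \<in> V" using ends srcV[OF e] tgtV[OF e] by (auto simp: doubleton_eq_iff)
  then have "pv v \<noteq> pv u" using vu injpv by (auto simp: inj_on_def)
  then show ?thesis using op_props[OF e ends] by (simp add: arc_simple_path)
qed

lemma arc_walk:
  "wk E vs es \<Longrightarrow> es \<noteq> [] \<Longrightarrow> distinct vs \<Longrightarrow> distinct es \<Longrightarrow>
   \<exists>P. arc P \<and> pathstart P = pv (hd vs) \<and> pathfinish P = pv (last vs) \<and> path_image P = (\<Union>e\<in>set es. pim e)"
proof (induction es arbitrary: vs)
  case Nil then show ?case by simp
next
  case (Cons e es')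
  obtain v vs' where vs: "vs = v # vs'" using Cons.prems(1) by (cases vs) (auto simp: wk_def)
  have eE: "e \<in> E" and vs'ne: "vs' \<noteq> []" and ends: "{src e, tgt e} = {v, hd vs'}" and w': "wk E vs' es'"
    using Cons.prems(1) vs wk_Cons by auto
  have vnot: "v \<notin> set vs'" using Cons.prems(3) vs by simp
  have vne: "v \<noteq> hd vs'" using vnot vs'ne by (metis list.set_sel(1))
  have arc1: "arc (op e v)" by (rule op_arc[OF eE ends vne])
  note opp = op_props[OF eE ends]
  show ?case
  proof (cases "es' = []")
    case True
    then have "vs' = [hd vs']" using w' vs'ne by (cases vs') (auto simp: wk_def)
    then show ?thesis using arc1 opp True vs by (intro exI[of _ "op e v"]) (simp, metis last.simps list.discI)
  next
    case False
    obtain P' where P': "arc P'" "pathstart P' = pv (hd vs')" "pathfinish P' = pv (last vs')"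
      "path_image P' = (\<Union>e\<in>set es'. pim e)"
      using Cons.IH[OF w' False] Cons.prems(3,4) vs by auto
    have "path_image (op e v) \<inter> path_image P' \<subseteq> {pathstart P'}"
    proof
      fix y assume y: "y \<in> path_image (op e v) \<inter> path_image P'"
      then obtain e' where e': "e' \<in> set es'" "y \<in> pim e'" using P'(4) by auto
      have e'E: "e' \<in> E" using e' wk_H[OF w'] by auto
      have "e' \<noteq> e" using e' Cons.prems(4) by auto
      then have "y \<in> pv ` {src e, tgt e}" using inter[OF eE e'E] y e' opp(3) by auto
      then have "y = pv v \<or> y = pv (hd vs')" using ends by auto
      moreover have "y \<noteq> pv v"
      proof
        assume "y = pv v"
        moreover have "v \<in> V" using ends srcV[OF eE] tgtV[OF eE] by (auto simp: doubleton_eq_iff)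
        ultimately have "v = src e' \<or> v = tgt e'" using von[OF e'E] e' by blast
        then show False using wk_setv[OF w' e'(1)] vnot by auto
      qed
      ultimately show "y \<in> {pathstart P'}" using P'(2) by simp
    qed
    then have "arc (op e v +++ P')" using arc_join[OF arc1 P'(1)] opp P' by simp
    moreover have "path_image (op e v +++ P') = (\<Union>e\<in>set (e # es'). pim e)"
      using path_image_join[of "op e v" P'] opp P' by auto
    ultimately show ?thesis using opp P' vs vs'ne by (intro exI[of _ "op e v +++ P'"]) simp
  qed
qed

lemma cyc_walk:
  assumes w: "wk E vs es" and ne: "es \<noteq> []" and hl: "hd vs = last vs" and dv: "distinct (tl vs)"
    and de: "distinct es"
  shows "\<exists>c. simple_path c \<and> pathfinish c = pathstart c \<and> path_image c = (\<Union>e\<in>set es. pim e)"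
proof -
  obtain e es' where es: "es = e # es'" using ne by (cases es) auto
  obtain v vs' where vs: "vs = v # vs'" using w by (cases vs) (auto simp: wk_def)
  have eE: "e \<in> E" and vs'ne: "vs' \<noteq> []" and ends: "{src e, tgt e} = {v, hd vs'}" and w': "wk E vs' es'"
    using w vs es wk_Cons by auto
  have lastv: "last vs' = v" using hl vs vs'ne by simp
  show ?thesis
  proof (cases "es' = []")
    case True
    then have "vs' = [hd vs']" using w' vs'ne by (cases vs') (auto simp: wk_def)
    then have "hd vs' = v" using lastv by (metis last_ConsL)
    then have "src e = v" "tgt e = v" using ends by auto
    then show ?thesis using sp[OF eE] ps[OF eE] pf[OF eE] es True by (intro exI[of _ "pe e"]) simp
  next
    case False
    have lv': "length vs' \<ge> 2" using w' False by (simp add: wk_def Suc_le_eq)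
    have dv': "distinct vs'" using dv vs by simp
    have vne: "v \<noteq> hd vs'"
    proof
      assume "v = hd vs'"
      then have "vs' ! 0 = vs' ! (length vs' - 1)" using lastv vs'ne by (simp add: hd_conv_nth last_conv_nth)
      moreover have "0 < length vs'" "length vs' - 1 < length vs'" using lv' by auto
      ultimately have "0 = length vs' - 1" using nth_eq_iff_index_eq[OF dv'] by blast
      then show False using lv' by simp
    qed
    obtain P' where P': "arc P'" "pathstart P' = pv (hd vs')" "pathfinish P' = pv v"
      "path_image P' = (\<Union>e\<in>set es'. pim e)"
      using arc_walk[OF w' False dv'] de es lastv by auto
    note opp = op_props[OF eE ends]
    have arc1: "arc (op e v)" by (rule op_arc[OF eE ends vne])
    have "path_image (op e v) \<inter> path_image P' \<subseteq> {pathstart (op e v), pathstart P'}"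
    proof
      fix y assume y: "y \<in> path_image (op e v) \<inter> path_image P'"
      then obtain e' where e': "e' \<in> set es'" "y \<in> pim e'" using P'(4) by auto
      have e'E: "e' \<in> E" using e' wk_H[OF w'] by auto
      have "e' \<noteq> e" using e' de es by auto
      then have "y \<in> pv ` {src e, tgt e}" using inter[OF eE e'E] y e' opp(3) by auto
      then show "y \<in> {pathstart (op e v), pathstart P'}" using ends opp P' by auto
    qed
    then have "simple_path (op e v +++ P')"
      using simple_path_join_loop[OF arc1 P'(1)] opp P' by simp
    moreover have "path_image (op e v +++ P') = (\<Union>e\<in>set es. pim e)"
      using path_image_join[of "op e v" P'] opp P' es by auto
    moreover have "pathfinish (op e v +++ P') = pathstart (op e v +++ P')" using opp P' by simp
    ultimately show ?thesis by blast
  qed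
qed

end

context pg begin

lemma noJ:
  assumes F: "F \<in> FS" and W: "openin (top_of_set S2) W" and WF: "W - G \<subseteq> F"
    and c: "simple_path c" "pathfinish c = pathstart c" "path_image c \<subseteq> G"
    and z: "z \<in> path_image c" "z \<in> W"
  shows False
proof -
  have cS: "path_image c \<subseteq> S2" using c(3) G_sub by blast
  obtain U1 U2 where U: "openin (top_of_set S2) U1" "openin (top_of_set S2) U2"
    "connected U1" "connected U2" "U1 \<inter> U2 = {}" "U1 \<union> U2 = S2 - path_image c"
    "path_image c \<subseteq> closure U1" "path_image c \<subseteq> closure U2"
    using Jordan_S2[OF c(1,2) cS] by blast
  have U1S: "U1 \<subseteq> S2" "U2 \<subseteq> S2" using U(6) by auto
  have "W \<inter> U1 \<noteq> {}" using openin_closure_meet[OF W z(2) _ U1S(1)] U(7) z(1) by blast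
  moreover have "openin (top_of_set S2) (W \<inter> U1)" using W U(1) by (rule openin_Int)
  ultimately obtain p1 where p1: "p1 \<in> W \<inter> U1" "p1 \<notin> G" using G_dense by blast
  have "W \<inter> U2 \<noteq> {}" using openin_closure_meet[OF W z(2) _ U1S(2)] U(8) z(1) by blast
  moreover have "openin (top_of_set S2) (W \<inter> U2)" using W U(2) by (rule openin_Int)
  ultimately obtain p2 where p2: "p2 \<in> W \<inter> U2" "p2 \<notin> G" using G_dense by blast
  have p12F: "p1 \<in> F" "p2 \<in> F" using p1 p2 WF by auto
  obtain O1 where O1: "open O1" "U1 = S2 \<inter> O1" using U(1) openin_open by blast
  obtain O2 where O2: "open O2" "U2 = S2 \<inter> O2" using U(2) openin_open by blast
  have FS2: "F \<subseteq> S2 - G" using face_sub[OF F] .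
  have "F \<subseteq> O1 \<union> O2" using FS2 U(6) c(3) O1 O2 by blast
  moreover have "O1 \<inter> O2 \<inter> F = {}" using FS2 U(5) O1 O2 by blast
  ultimately have "O1 \<inter> F = {} \<or> O2 \<inter> F = {}"
    using connectedD[OF face_conn[OF F] O1(1) O2(1)] by blast
  then show False using p12F p1 p2 O1 O2 by blast
qed

lemma cell_basic:
  assumes F: "F \<in> FS" and hom: "homeomorphism (cball (0::complex) 1) (closure F) h k"
  shows "openin (top_of_set S2) (h ` ball 0 1)" "F \<subseteq> h ` ball 0 1" "h ` ball 0 1 - G \<subseteq> F"
    "h ` ball 0 1 \<inter> h ` sphere 0 1 = {}" "closure F = h ` ball 0 1 \<union> h ` sphere 0 1"
    "h ` sphere 0 1 homeomorphic sphere (0::complex) 1" "h ` sphere 0 1 \<subseteq> G"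
proof -
  have kh: "k (h x) = x" if "x \<in> cball 0 1" for x using hom that by (simp add: homeomorphism_def)
  have hk: "h (k y) = y" if "y \<in> closure F" for y using hom that by (simp add: homeomorphism_def)
  have hc: "h ` cball 0 1 = closure F" and kc: "k ` closure F = cball 0 1"
    and conth: "continuous_on (cball 0 1) h" and contk: "continuous_on (closure F) k"
    using hom by (auto simp: homeomorphism_def)
  have cF: "closure F \<subseteq> S2" using face_closure[OF F] .
  have injh: "inj_on h (cball 0 1)" using kh by (rule inj_on_inverseI)
  have "closure F \<noteq> S2"
  proof
    assume "closure F = S2"
    then have "S2 homeomorphic cball (0::complex) 1" using hom homeomorphic_def homeomorphic_sym by metis
    then have "contractible S2" using homeomorphic_contractible_eq convex_imp_contractible convex_cball by blast
    then show False by (simp add: S2_def contractible_sphere)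
  qed
  then obtain q where q: "q \<in> S2" "q \<notin> closure F" using cF by blast
  obtain \<sigma> \<tau> where ch: "homeomorphism (S2 - {q}) (UNIV::complex set) \<sigma> \<tau>"
    using S2_chart[OF q(1)] by blast
  have \<tau>\<sigma>: "\<tau> (\<sigma> x) = x" if "x \<in> S2 - {q}" for x using ch that by (simp add: homeomorphism_def)
  have cont\<sigma>: "continuous_on (S2 - {q}) \<sigma>" and cont\<tau>: "continuous_on UNIV \<tau>"
    using ch by (auto simp: homeomorphism_def)
  have cFq: "closure F \<subseteq> S2 - {q}" using cF q by blast
  have hS: "h x \<in> S2 - {q}" if "x \<in> cball 0 1" for x using hc cFq that by blast
  show dis: "h ` ball 0 1 \<inter> h ` sphere 0 1 = {}"
  proof (rule ccontr)
    assume "h ` ball 0 1 \<inter> h ` sphere 0 1 \<noteq> {}"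
    then obtain x y where xy: "x \<in> ball 0 1" "y \<in> sphere 0 1" "h x = h y" by blast
    have "x \<in> cball 0 1" "y \<in> cball 0 1" using xy(1,2) by auto
    then have "x = y" using inj_onD[OF injh xy(3)] by blast
    then show False using xy(1,2) by simp
  qed
  have "cball (0::complex) 1 = ball 0 1 \<union> sphere 0 1" by auto
  then show cl: "closure F = h ` ball 0 1 \<union> h ` sphere 0 1" using hc by auto
  show oW: "openin (top_of_set S2) (h ` ball 0 1)"
  proof -
    have "open ((\<sigma> \<circ> h) ` ball 0 1)"
    proof (rule invariance_of_domain)
      show "continuous_on (ball 0 1) (\<sigma> \<circ> h)"
      proof (rule continuous_on_compose[OF continuous_on_subset[OF conth] continuous_on_subset[OF cont\<sigma>]])
        show "ball 0 1 \<subseteq> cball (0::complex) 1" by auto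
        show "h ` ball 0 1 \<subseteq> S2 - {q}"
        proof
          fix y assume "y \<in> h ` ball 0 1"
          then obtain x where "x \<in> ball 0 1" "y = h x" by blast
          then show "y \<in> S2 - {q}" using hS[of x] by simp
        qed
      qed
      show "inj_on (\<sigma> \<circ> h) (ball 0 1)"
      proof (rule inj_onI)
        fix x y assume xy: "x \<in> ball 0 1" "y \<in> ball 0 1" "(\<sigma> \<circ> h) x = (\<sigma> \<circ> h) y"
        then have xy': "x \<in> cball 0 1" "y \<in> cball 0 1" by auto
        have "h x = \<tau> (\<sigma> (h x))" using \<tau>\<sigma>[OF hS[OF xy'(1)]] by simp
        also have "\<dots> = \<tau> (\<sigma> (h y))" using xy(3) by simp
        also have "\<dots> = h y" using \<tau>\<sigma>[OF hS[OF xy'(2)]] by simp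
        finally show "x = y" using inj_onD[OF injh _ xy'] by blast
      qed
    qed simp
    moreover have "\<tau> ` ((\<sigma> \<circ> h) ` ball 0 1) = h ` ball 0 1"
    proof -
      have hb: "h x \<in> S2 - {q}" if "x \<in> ball 0 1" for x using hS that by simp
      have "\<tau> ` ((\<sigma> \<circ> h) ` ball 0 1) = (\<tau> \<circ> (\<sigma> \<circ> h)) ` ball 0 1" by (simp add: image_comp)
      also have "\<dots> = h ` ball 0 1"
      proof (intro image_cong refl)
        fix x assume "x \<in> ball (0::complex) 1"
        then show "(\<tau> \<circ> (\<sigma> \<circ> h)) x = h x" using \<tau>\<sigma>[OF hb] by simp
      qed
      finally show ?thesis .
    qed
    ultimately show ?thesis using openin_S2_image[OF ch _ q(1)] by metis
  qed
  show FW: "F \<subseteq> h ` ball 0 1"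
  proof
    fix y assume yF: "y \<in> F"
    show "y \<in> h ` ball 0 1"
    proof (rule ccontr)
      assume "y \<notin> h ` ball 0 1"
      then have "y \<in> h ` sphere 0 1" using cl yF closure_subset by blast
      then have ky: "k y \<in> sphere 0 1" using kh by (auto simp: less_imp_le)
      have Fq: "F \<subseteq> S2 - {q}" using cFq closure_subset by blast
      have "openin (top_of_set (S2 - {q})) F" using openin_subset_trans[OF face_openin[OF F] Fq] by blast
      then have "openin (top_of_set UNIV) (\<sigma> ` F)" using homeomorphism_imp_open_map[OF ch] by blast
      then have oF: "open (\<sigma> ` F)" by simp
      have \<tau>\<sigma>F: "\<tau> ` \<sigma> ` F = F"
      proof -
        have "\<tau> ` \<sigma> ` F = (\<tau> \<circ> \<sigma>) ` F" by (simp add: image_comp)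
        also have "\<dots> = id ` F"
        proof (intro image_cong refl)
          fix x assume "x \<in> F" then show "(\<tau> \<circ> \<sigma>) x = id x" using \<tau>\<sigma> Fq by auto
        qed
        finally show ?thesis by simp
      qed
      have "open ((k \<circ> \<tau>) ` (\<sigma> ` F))"
      proof (rule invariance_of_domain[OF _ oF])
        show "continuous_on (\<sigma> ` F) (k \<circ> \<tau>)"
        proof (rule continuous_on_compose[OF continuous_on_subset[OF cont\<tau>] continuous_on_subset[OF contk]])
          show "\<tau> ` \<sigma> ` F \<subseteq> closure F" using \<tau>\<sigma>F closure_subset by simp
        qed simp
        show "inj_on (k \<circ> \<tau>) (\<sigma> ` F)"
        proof (rule inj_onI)
          fix a b assume ab: "a \<in> \<sigma> ` F" "b \<in> \<sigma> ` F" "(k \<circ> \<tau>) a = (k \<circ> \<tau>) b"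
          then obtain a' b' where "a' \<in> F" "b' \<in> F" "a = \<sigma> a'" "b = \<sigma> b'" by blast
          moreover have "a' \<in> closure F" "b' \<in> closure F" using calculation closure_subset by blast+
          ultimately show "a = b" using ab(3) \<tau>\<sigma> Fq hk by (metis comp_apply subsetD)
        qed
      qed
      moreover have "(k \<circ> \<tau>) ` (\<sigma> ` F) = k ` F" using \<tau>\<sigma>F by (metis image_comp)
      ultimately have okF: "open (k ` F)" by simp
      have "k ` F \<subseteq> cball 0 1" using kc closure_subset by blast
      then have "k ` F \<subseteq> ball 0 1" using okF interior_maximal interior_cball by metis
      then show False using ky yF by auto
    qed
  qed
  show WF: "h ` ball 0 1 - G \<subseteq> F"
  proof
    fix y assume y: "y \<in> h ` ball 0 1 - G"
    then have "y \<in> closure F" using cl by blast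
    then show "y \<in> F" using face_closure_pt[OF F] cF y by blast
  qed
  show "h ` sphere 0 1 homeomorphic sphere (0::complex) 1"
  proof -
    obtain g where "homeomorphism (sphere 0 1) (h ` sphere 0 1) h g"
      using homeomorphism_compact[OF compact_sphere continuous_on_subset[OF conth] refl inj_on_subset[OF injh]]
      by (metis sphere_cball)
    then show ?thesis using homeomorphic_def homeomorphic_sym by blast
  qed
  show "h ` sphere 0 1 \<subseteq> G"
  proof -
    have "h ` sphere 0 1 \<subseteq> face_boundary F" using cl dis FW unfolding face_boundary_def by blast
    then show ?thesis using fb_sub_G[OF F] by blast
  qed
qed

end

lemma islimpt_UN_finite:
  assumes "finite I" "y islimpt (\<Union>i\<in>I. A i)" shows "\<exists>i\<in>I. y islimpt A i"
  using assms by (induction I rule: finite_induct) (auto simp: islimpt_Un)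

context pg begin

lemma pim_closure: assumes e: "e \<in> E" shows "pim e \<subseteq> closure (eint e)"
proof -
  have cont: "continuous_on {0..1} (pe e)" using sp[OF e] simple_path_imp_path path_def by blast
  have "pe e ` closure {0<..<1} \<subseteq> closure (pe e ` {0<..<1})"
  proof (rule image_closure_subset)
    show "continuous_on (closure {0<..<1}) (pe e)" using cont by simp
    show "pe e ` {0<..<1} \<subseteq> closure (pe e ` {0<..<1})" by (rule closure_subset)
  qed simp
  then show ?thesis by (simp add: path_image_def eint_def)
qed

lemma near_end:
  assumes e: "e \<in> E" and O: "open Q" and t: "t = 0 \<or> t = 1" and inQ: "pe e t \<in> Q"
  shows "eint e \<inter> Q \<noteq> {}"
proof -
  have cont: "continuous_on {0..1} (pe e)" using sp[OF e] simple_path_imp_path path_def by blast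
  obtain \<epsilon> where \<epsilon>: "\<epsilon> > 0" "ball (pe e t) \<epsilon> \<subseteq> Q" using O inQ open_contains_ball by blast
  have "t \<in> {0..1}" using t by auto
  then obtain d where d: "d > 0" "\<forall>x'\<in>{0..1}. dist x' t < d \<longrightarrow> dist (pe e x') (pe e t) < \<epsilon>"
    using cont \<epsilon>(1) unfolding continuous_on_iff by blast
  define s where "s = (if t = 0 then min (d/2) (1/2) else 1 - min (d/2) (1/2))"
  have s: "s \<in> {0<..<1}" "dist s t < d" using d t by (auto simp: s_def dist_real_def)
  then have "pe e s \<in> ball (pe e t) \<epsilon>" using d by (auto simp: dist_commute)
  then have "pe e s \<in> Q" using \<epsilon> by blast
  moreover have "pe e s \<in> eint e" using s by (simp add: eint_def)
  ultimately show ?thesis by blast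
qed

lemma cyc_edges:
  assumes J: "J \<subseteq> G" "J homeomorphic sphere (0::complex) 1"
  shows "J = edges_image pe {e\<in>E. pim e \<subseteq> J}"
proof
  show "edges_image pe {e\<in>E. pim e \<subseteq> J} \<subseteq> J" by (auto simp: edges_image_def)
  show "J \<subseteq> edges_image pe {e\<in>E. pim e \<subseteq> J}"
  proof
    fix y assume yJ: "y \<in> J"
    obtain \<phi> \<psi> where hom: "homeomorphism (sphere (0::complex) 1) J \<phi> \<psi>"
      using J(2) homeomorphic_sym unfolding homeomorphic_def by blast
    have conJ: "connected J" using homeomorphic_connectedness[OF J(2)] connected_sphere[of "0::complex" 1] by simp
    have "\<phi> 1 \<noteq> \<phi> (-1)" "\<phi> 1 \<in> J" "\<phi> (-1) \<in> J"
      using hom unfolding homeomorphism_def by (metis norm_minus_cancel norm_one mem_sphere_0 one_neq_neg_one image_eqI)+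
    then have nsing: "J \<noteq> {x}" for x by auto
    have lim: "y islimpt J" using connected_imp_perfect[OF conJ yJ nsing] .
    have "J \<subseteq> (J - pv ` V) \<union> pv ` V" by auto
    then have "y islimpt ((J - pv ` V) \<union> pv ` V)" using lim islimpt_subset by blast
    then have "y islimpt (J - pv ` V) \<or> y islimpt pv ` V" using islimpt_Un by blast
    moreover have "\<not> y islimpt pv ` V" using islimpt_finite finV by blast
    ultimately have "y islimpt (J - pv ` V)" by blast
    moreover have "J - pv ` V \<subseteq> (\<Union>e\<in>E. eint e \<inter> J)"
    proof
      fix x assume x: "x \<in> J - pv ` V"
      then have "x \<in> G" using J(1) by blast
      then show "x \<in> (\<Union>e\<in>E. eint e \<inter> J)" using G_cases x by blast
    qed
    ultimately have "y islimpt (\<Union>e\<in>E. eint e \<inter> J)" using islimpt_subset by blast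
    then obtain e where e: "e \<in> E" "y islimpt (eint e \<inter> J)" using islimpt_UN_finite finE by blast
    then have "eint e \<inter> J \<noteq> {}" by (metis islimpt_EMPTY)
    then have pJ: "pim e \<subseteq> J" using CL[OF J e(1)] by blast
    have "y islimpt pim e" using e(2) eint_sub[OF e(1)] islimpt_subset by blast
    then have "y \<in> pim e" using closed_limpt compact_imp_closed compact_simple_path_image sp[OF e(1)] by blast
    then show "y \<in> edges_image pe {e\<in>E. pim e \<subseteq> J}" using pJ e(1) by (auto simp: edges_image_def)
  qed
qed

end

lemma set_hd_last_mid:
  assumes "length vs \<ge> 2" shows "set vs \<subseteq> {hd vs, last vs} \<union> set (butlast (tl vs))"
proof -
  define a where "a = hd vs"
  define r where "r = tl vs"
  have vs: "vs = a # r" using assms by (cases vs) (auto simp: a_def r_def)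
  have "r \<noteq> []" using assms vs by auto
  then have "r = butlast r @ [last r]" by simp
  then have "set r \<subseteq> set (butlast r) \<union> {last r}" by (metis Un_insert_right set_append empty_set list.simps(15) sup_bot.right_neutral order_refl)
  then show ?thesis using vs \<open>r \<noteq> []\<close> by auto
qed

context pg begin

lemma cell_noG:
  assumes F: "F \<in> FS" and hom: "homeomorphism (cball (0::complex) 1) (closure F) h k"
  shows "h ` ball 0 1 \<inter> G = {}"
proof (rule ccontr)
  define W where "W = h ` ball 0 1"
  define Bd where "Bd = h ` sphere 0 1"
  note cb = cell_basic[OF F hom, folded W_def Bd_def]
  assume "h ` ball 0 1 \<inter> G \<noteq> {}"
  then obtain z where z: "z \<in> W" "z \<in> G" unfolding W_def by blast
  define H where "H = {e\<in>E. eint e \<inter> W \<noteq> {}}"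
  define B where "B = {v\<in>V. pv v \<in> Bd}"
  have HE: "H \<subseteq> E" by (auto simp: H_def)
  have WS: "W \<subseteq> S2" using cb(1) openin_imp_subset by blast
  obtain O1 where O1: "open O1" "W = S2 \<inter> O1" using cb(1) openin_open by blast
  have eintW: "eint e \<subseteq> W" if eH: "e \<in> H" for e
  proof -
    have eE: "e \<in> E" and ne: "eint e \<inter> W \<noteq> {}" using eH by (auto simp: H_def)
    have "eint e \<inter> Bd = {}"
    proof (rule ccontr)
      assume "eint e \<inter> Bd \<noteq> {}"
      then have "pim e \<subseteq> Bd" using CL[OF cb(7) cb(6) eE] by blast
      then have "eint e \<subseteq> Bd" using eint_sub[OF eE] by blast
      then show False using ne cb(4) by blast
    qed
    have cont: "continuous_on {0..1} (pe e)" using sp[OF eE] simple_path_imp_path path_def by blast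
    have "continuous_on {0<..<1} (pe e)" by (rule continuous_on_subset[OF cont]) auto
    then have ceint: "connected (eint e)" unfolding eint_def
      using connected_continuous_image connected_Ioo by blast
    have eS: "eint e \<subseteq> S2" using eint_sub[OF eE] piS2[OF eE] by blast
    have Wcl: "W \<subseteq> closure F" using cb(5) by blast
    have sub1: "eint e \<subseteq> O1 \<union> - closure F"
    proof
      fix x assume x: "x \<in> eint e"
      show "x \<in> O1 \<union> - closure F"
      proof (cases "x \<in> closure F")
        case True
        then have "x \<in> W \<union> Bd" using cb(5) by blast
        then have "x \<in> W" using x \<open>eint e \<inter> Bd = {}\<close> by blast
        then show ?thesis using O1(2) by blast
      qed simp
    qed
    have dis1: "O1 \<inter> - closure F \<inter> eint e = {}"
    proof -
      { fix x assume x: "x \<in> O1" "x \<notin> closure F" "x \<in> eint e"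
        then have "x \<in> W" using eS O1(2) by blast
        then have False using Wcl x(2) by blast }
      then show ?thesis by blast
    qed
    have "O1 \<inter> eint e = {} \<or> - closure F \<inter> eint e = {}"
      by (rule connectedD[OF ceint O1(1) open_Compl[OF closed_closure] dis1 sub1])
    moreover have "O1 \<inter> eint e \<noteq> {}" using ne O1 by blast
    ultimately have "- closure F \<inter> eint e = {}" by blast
    then have "eint e \<subseteq> O1" using sub1 by blast
    then show ?thesis using eS O1(2) by blast
  qed
  have pimW: "pim e \<subseteq> W \<union> Bd" if eH: "e \<in> H" for e
  proof -
    have "pim e \<subseteq> closure (eint e)" using pim_closure HE eH by blast
    also have "\<dots> \<subseteq> closure F"
    proof -
      have "eint e \<subseteq> closure F" using eintW[OF eH] cb(5) by blast
      then show ?thesis using closure_minimal closed_closure by blast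
    qed
    finally show ?thesis using cb(5) by blast
  qed
  have endsWB: "pv (src e) \<in> W \<union> Bd" "pv (tgt e) \<in> W \<union> Bd" if eH: "e \<in> H" for e
    using pimW[OF eH] pim_eq HE eH by auto
  have incH: "e \<in> H" if v: "v \<in> V" "pv v \<in> W" and eE: "e \<in> E" and inc: "src e = v \<or> tgt e = v" for v e
  proof -
    have "pv v \<in> O1" using v O1 by blast
    then have "pe e 0 \<in> O1 \<or> pe e 1 \<in> O1" using inc pe0[OF eE] pe1[OF eE] by auto
    then have "eint e \<inter> O1 \<noteq> {}" using near_end[OF eE O1(1)] by blast
    moreover have "eint e \<subseteq> S2" using eint_sub[OF eE] piS2[OF eE] by blast
    ultimately have "eint e \<inter> W \<noteq> {}" using O1 by blast
    then show ?thesis using eE by (simp add: H_def)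
  qed
  have deg: "2 \<le> card {e\<in>H. src e = v} + card {e\<in>H. tgt e = v}"
    if v: "v \<in> V" "v \<notin> B" and inc: "\<exists>e\<in>H. src e = v \<or> tgt e = v" for v
  proof -
    have "pv v \<in> W" using inc endsWB v by (auto simp: B_def)
    then have "{e\<in>H. src e = v} = {e\<in>E. src e = v}" "{e\<in>H. tgt e = v} = {e\<in>E. tgt e = v}"
      using incH[OF v(1)] HE by auto
    then show ?thesis using deg2[OF v(1)] by (simp add: Defs.degree_def)
  qed
  have Hne: "H \<noteq> {}"
  proof -
    consider v where "v \<in> V" "z = pv v" | e where "e \<in> E" "z \<in> eint e" using G_cases[OF z(2)] by blast
    then show ?thesis
    proof cases
      case 1
      have "degree E src tgt v \<ge> 2" using deg2[OF 1(1)] .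
      then have "2 \<le> card {e\<in>E. src e = v} + card {e\<in>E. tgt e = v}" by (simp add: Defs.degree_def)
      then have "{e\<in>E. src e = v} \<noteq> {} \<or> {e\<in>E. tgt e = v} \<noteq> {}" by (metis add_0 card.empty not_numeral_le_zero)
      then obtain e where "e \<in> E" "src e = v \<or> tgt e = v" by blast
      then have "e \<in> H" using incH[OF 1(1)] z 1 by blast
      then show ?thesis by blast
    next
      case 2 then show ?thesis using z by (auto simp: H_def)
    qed
  qed
  have cGW: False if c: "simple_path c" "pathfinish c = pathstart c" "path_image c \<subseteq> G"
     and y: "y \<in> path_image c" "y \<in> W" for c y
    using noJ[OF F cb(1) cb(3) c y] .
  have CB: "(\<exists>vs es. wk H vs es \<and> es \<noteq> [] \<and> hd vs = last vs \<and> distinct (tl vs) \<and> distinct es)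
       \<or> (\<exists>vs es. wk H vs es \<and> es \<noteq> [] \<and> distinct vs \<and> distinct es \<and> hd vs \<in> B \<and> last vs \<in> B
              \<and> (\<forall>x\<in>set (butlast (tl vs)). x \<notin> B))"
    by (rule comb[OF HE Hne], rule deg, assumption+)
  from CB show False
  proof (elim disjE exE conjE)
    fix vs es assume w: "wk H vs es" and ne: "es \<noteq> []" and hl: "hd vs = last vs"
      and dv: "distinct (tl vs)" and de: "distinct es"
    obtain c where c: "simple_path c" "pathfinish c = pathstart c" "path_image c = (\<Union>e\<in>set es. pim e)"
      using cyc_walk[OF wk_mono[OF HE w] ne hl dv de] by blast
    have "path_image c \<subseteq> G" using c(3) wk_H[OF w] HE by (auto simp: G_eq)
    moreover obtain e where e: "e \<in> set es" using ne by (cases es) auto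
    then have "e \<in> H" using wk_H[OF w] by blast
    then obtain y where y: "y \<in> eint e" "y \<in> W" by (auto simp: H_def)
    then have "y \<in> path_image c" using c(3) e eint_sub HE \<open>e \<in> H\<close> by blast
    ultimately show False using cGW c y by blast
  next
    fix vs es assume w: "wk H vs es" and ne: "es \<noteq> []" and dv: "distinct vs" and de: "distinct es"
      and a: "hd vs \<in> B" and b: "last vs \<in> B" and mid: "\<forall>x\<in>set (butlast (tl vs)). x \<notin> B"
    obtain P where P: "arc P" "pathstart P = pv (hd vs)" "pathfinish P = pv (last vs)"
      "path_image P = (\<Union>e\<in>set es. pim e)"
      using arc_walk[OF wk_mono[OF HE w] ne dv de] by blast
    have lv: "length vs \<ge> 2" using w ne by (cases es) (auto simp: wk_def)
    have ab: "hd vs \<noteq> last vs"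
    proof
      assume "hd vs = last vs"
      moreover have "vs \<noteq> []" using lv by auto
      ultimately have "vs ! 0 = vs ! (length vs - 1)" by (simp add: hd_conv_nth last_conv_nth)
      moreover have "0 < length vs" "length vs - 1 < length vs" using lv by auto
      ultimately have "0 = length vs - 1" using nth_eq_iff_index_eq[OF dv] by blast
      then show False using lv by simp
    qed
    have aV: "hd vs \<in> V" "last vs \<in> V" using a b by (auto simp: B_def)
    have pab: "pv (hd vs) \<noteq> pv (last vs)" using ab aV injpv by (auto simp: inj_on_def)
    obtain cB where cB: "simple_path cB" "pathfinish cB = pathstart cB" "path_image cB = Bd"
      using circle_simple_path[OF cb(6)] by blast
    have inB: "pv (hd vs) \<in> path_image cB" "pv (last vs) \<in> path_image cB" using a b cB(3) by (auto simp: B_def)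
    obtain u d where ud: "arc u" "arc d" "pathstart u = pv (hd vs)" "pathfinish u = pv (last vs)"
      "pathstart d = pv (last vs)" "pathfinish d = pv (hd vs)"
      "path_image u \<inter> path_image d = {pv (hd vs), pv (last vs)}"
      "path_image u \<union> path_image d = path_image cB"
      using exists_double_arc[OF cB(1,2) inB pab] by blast
    have dBd: "path_image d \<subseteq> Bd" using ud(8) cB(3) by blast
    have inter: "path_image P \<inter> path_image d \<subseteq> {pathstart P, pathstart d}"
    proof
      fix y assume y: "y \<in> path_image P \<inter> path_image d"
      then obtain e where e: "e \<in> set es" "y \<in> pim e" using P(4) by auto
      have eH: "e \<in> H" using e wk_H[OF w] by blast
      have yBd: "y \<in> Bd" using y dBd by blast
      then have "y \<notin> eint e" using eintW[OF eH] cb(4) by blast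
      then have "y = pv (src e) \<or> y = pv (tgt e)" using pim_eq[of e] HE eH e(2) by auto
      then obtain x where x0: "x \<in> {src e, tgt e}" "y = pv x" by blast
      then have x: "x \<in> set vs" "y = pv x" using wk_setv[OF w e(1)] by auto
      have xV: "x \<in> V" using x0 eH HE srcV tgtV by blast
      show "y \<in> {pathstart P, pathstart d}"
      proof (rule ccontr)
        assume "y \<notin> {pathstart P, pathstart d}"
        then have "x \<noteq> hd vs" "x \<noteq> last vs" using x P(2) ud(5) by auto
        then have "x \<in> set (butlast (tl vs))" using set_hd_last_mid[OF lv] x(1) by blast
        then have "x \<notin> B" using mid by blast
        then show False using xV yBd x(2) by (simp add: B_def)
      qed
    qed
    have sc: "simple_path (P +++ d)"
      using simple_path_join_loop[OF P(1) ud(2)] P ud inter by simp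
    have cl: "pathfinish (P +++ d) = pathstart (P +++ d)" using P ud by simp
    have pimg: "path_image (P +++ d) = path_image P \<union> path_image d"
      by (rule path_image_join) (simp add: P(3) ud(5))
    have "path_image (P +++ d) \<subseteq> G"
      using pimg P(4) dBd cb(7) wk_H[OF w] HE by (auto simp: G_eq)
    moreover obtain e where e: "e \<in> set es" using ne by (cases es) auto
    then have "e \<in> H" using wk_H[OF w] by blast
    then obtain y where y: "y \<in> eint e" "y \<in> W" by (auto simp: H_def)
    then have "y \<in> path_image (P +++ d)" using pimg P(4) e eint_sub HE \<open>e \<in> H\<close> by blast
    ultimately show False using cGW sc cl y by blast
  qed
qed

lemma cell_face:
  assumes F: "F \<in> FS" and hc: "closure F homeomorphic cball (0::complex) 1"
  shows "face_boundary F homeomorphic sphere (0::complex) 1" "face_boundary F \<subseteq> G"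
    "face_boundary F = edges_image pe {e\<in>E. pim e \<subseteq> face_boundary F}"
proof -
  obtain h k where hom: "homeomorphism (cball (0::complex) 1) (closure F) h k"
    using hc homeomorphic_sym unfolding homeomorphic_def by blast
  note cb = cell_basic[OF F hom]
  have "h ` ball 0 1 \<inter> G = {}" using cell_noG[OF F hom] .
  then have Fe: "F = h ` ball 0 1" using cb(2,3) by blast
  have "face_boundary F = (h ` ball 0 1 \<union> h ` sphere 0 1) - h ` ball 0 1"
    unfolding face_boundary_def using cb(5) Fe by simp
  also have "\<dots> = h ` sphere 0 1" using cb(4) by blast
  finally have fb: "face_boundary F = h ` sphere 0 1" .
  show "face_boundary F homeomorphic sphere (0::complex) 1" unfolding fb by (rule cb(6))
  show "face_boundary F \<subseteq> G" unfolding fb by (rule cb(7))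
  show "face_boundary F = edges_image pe {e\<in>E. pim e \<subseteq> face_boundary F}"
    unfolding fb by (rule cyc_edges[OF cb(7) cb(6)])
qed

end

context pg begin

definition Cset where "Cset F = {e\<in>E. pim e \<subseteq> face_boundary F}"

lemma eint_ne: "e \<in> E \<Longrightarrow> pe e (1/2) \<in> eint e" by (simp add: eint_def)

lemma EI: assumes "C \<subseteq> E" "C' \<subseteq> E" "edges_image pe C = edges_image pe C'" shows "C = C'"
proof -
  have *: "C1 \<subseteq> C2" if "C1 \<subseteq> E" "C2 \<subseteq> E" "edges_image pe C1 = edges_image pe C2" for C1 C2
  proof
    fix e assume e: "e \<in> C1"
    then have eE: "e \<in> E" using that by blast
    have "pe e (1/2) \<in> edges_image pe C1" using e eint_sub[OF eE] eint_ne[OF eE]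
      by (auto simp: edges_image_def)
    then have "pe e (1/2) \<in> edges_image pe C2" using that(3) by simp
    then obtain e' where "e' \<in> C2" "pe e (1/2) \<in> pim e'" by (auto simp: edges_image_def)
    then have "e' = e" using eint_unique[OF eE eint_ne[OF eE]] that(2) by blast
    then show "e \<in> C2" using \<open>e' \<in> C2\<close> by simp
  qed
  show ?thesis using *[OF assms] *[OF assms(2,1) assms(3)[symmetric]] by blast
qed

lemma face_in_side:
  assumes F: "F \<in> FS" and J: "J \<subseteq> G"
    and U: "openin (top_of_set S2) U1" "openin (top_of_set S2) U2" "U1 \<inter> U2 = {}" "U1 \<union> U2 = S2 - J"
  shows "F \<subseteq> U1 \<or> F \<subseteq> U2"
proof -
  obtain O1 where O1: "open O1" "U1 = S2 \<inter> O1" using U(1) openin_open by blast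
  obtain O2 where O2: "open O2" "U2 = S2 \<inter> O2" using U(2) openin_open by blast
  have FS2: "F \<subseteq> S2 - G" using face_sub[OF F] .
  have "F \<subseteq> O1 \<union> O2" using FS2 U(4) J O1 O2 by blast
  moreover have "O1 \<inter> O2 \<inter> F = {}" using FS2 U(3) O1 O2 by blast
  ultimately have "O1 \<inter> F = {} \<or> O2 \<inter> F = {}"
    using connectedD[OF face_conn[OF F] O1(1) O2(1)] by blast
  then show ?thesis using FS2 O1 O2 \<open>F \<subseteq> O1 \<union> O2\<close> by blast
qed

lemma side:
  assumes F: "F \<in> FS" and U: "openin (top_of_set S2) U" "connected U" "U \<inter> face_boundary F = {}" "F \<subseteq> U"
  shows "F = U"
proof -
  have "openin (top_of_set U) F" using openin_subset_trans[OF face_openin[OF F] U(4)] openin_imp_subset[OF U(1)] by blast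
  moreover have "closedin (top_of_set U) F"
  proof -
    have "U \<inter> closure F = F" using closure_fb[OF F] U(3,4) by blast
    then show ?thesis using closedin_closed by (metis closed_closure inf_commute)
  qed
  ultimately show ?thesis using U(2) face_ne[OF F] unfolding connected_clopen by blast
qed

end

locale pgc = pg +
  assumes cell: "is_cellular V E pv pe"
    and notc: "\<not> (graph_image V E pv pe homeomorphic sphere (0::complex) 1)"
begin

lemma fbh: "F \<in> FS \<Longrightarrow> face_boundary F homeomorphic sphere (0::complex) 1"
  and fbG: "F \<in> FS \<Longrightarrow> face_boundary F \<subseteq> G"
  and fbE: "F \<in> FS \<Longrightarrow> face_boundary F = edges_image pe (Cset F)"
  using cell_face[of F] cell unfolding is_cellular_def Cset_def by auto

lemma Cset_E: "Cset F \<subseteq> E" by (auto simp: Cset_def)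

lemma Nface: assumes F1: "F1 \<in> FS" and F2: "F2 \<in> FS" and ne: "F1 \<noteq> F2"
  shows "face_boundary F1 \<noteq> face_boundary F2"
proof
  assume eq: "face_boundary F1 = face_boundary F2"
  define J where "J = face_boundary F1"
  obtain c where c: "simple_path c" "pathfinish c = pathstart c" "path_image c = J"
    using circle_simple_path[OF fbh[OF F1]] J_def by blast
  have JG: "J \<subseteq> G" using fbG[OF F1] J_def by simp
  have cS: "path_image c \<subseteq> S2" using c(3) JG G_sub by blast
  obtain U1 U2 where U: "openin (top_of_set S2) U1" "openin (top_of_set S2) U2"
    "connected U1" "connected U2" "U1 \<inter> U2 = {}" "U1 \<union> U2 = S2 - J"
    "J \<subseteq> closure U1" "J \<subseteq> closure U2"
    using Jordan_S2[OF c(1,2) cS] c(3) by blast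
  have sides: "F = U1 \<or> F = U2" if F: "F \<in> FS" "face_boundary F = J" for F
  proof -
    have "F \<subseteq> U1 \<or> F \<subseteq> U2" using face_in_side[OF F(1) JG U(1,2,5,6)] .
    moreover have "U1 \<inter> face_boundary F = {}" "U2 \<inter> face_boundary F = {}" using F(2) U(6) by auto
    ultimately show ?thesis using side[OF F(1) U(1,3)] side[OF F(1) U(2,4)] by blast
  qed
  have "F1 = U1 \<or> F1 = U2" using sides[OF F1] J_def by simp
  moreover have "F2 = U1 \<or> F2 = U2" using sides[OF F2] eq J_def by simp
  ultimately have both: "F1 \<union> F2 = U1 \<union> U2" using ne by auto
  have "G \<subseteq> J"
  proof
    fix y assume y: "y \<in> G"
    show "y \<in> J"
    proof (rule ccontr)
      assume "y \<notin> J"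
      then have "y \<in> F1 \<union> F2" using y G_sub both U(6) by blast
      then show False using y face_sub[OF F1] face_sub[OF F2] by blast
    qed
  qed
  then have "G = J" using JG by blast
  then show False using notc fbh[OF F1] J_def by simp
qed

lemma finFS: "finite FS"
proof -
  have "inj_on Cset FS"
  proof (rule inj_onI)
    fix F1 F2 assume F: "F1 \<in> FS" "F2 \<in> FS" "Cset F1 = Cset F2"
    then have "face_boundary F1 = face_boundary F2" using fbE by simp
    then show "F1 = F2" using Nface F(1,2) by blast
  qed
  moreover have "Cset ` FS \<subseteq> Pow E" using Cset_E by auto
  then have "finite (Cset ` FS)" using finE finite_subset by blast
  ultimately show ?thesis using finite_imageD by blast
qed

lemma in_Cset: assumes F: "F \<in> FS" and e: "e \<in> E" and x: "x \<in> eint e" "x \<in> face_boundary F"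
  shows "e \<in> Cset F"
proof -
  obtain e' where "e' \<in> Cset F" "x \<in> pim e'" using fbE[OF F] x(2) by (auto simp: edges_image_def)
  then have "e' = e" using eint_unique[OF e x(1)] Cset_E by blast
  then show ?thesis using \<open>e' \<in> Cset F\<close> by simp
qed

lemma two_faces:
  assumes e: "e \<in> E"
  shows "\<exists>F1\<in>FS. \<exists>F2\<in>FS. F1 \<noteq> F2 \<and> e \<in> Cset F1 \<and> e \<in> Cset F2"
proof -
  define x where "x = pe e (1/2)"
  have xe: "x \<in> eint e" using eint_ne[OF e] x_def by simp
  have xG: "x \<in> G" using xe eint_sub[OF e] G_eq e by blast
  have xS: "x \<in> S2" using xG G_sub by blast
  obtain r where r: "r > 0" "ball x r \<inter> G \<subseteq> eint e" using eint_local[OF e xe] by blast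
  have "x islimpt (S2 - G)"
    unfolding islimpt_approachable
  proof (intro allI impI)
    fix \<epsilon> :: real assume "\<epsilon> > 0"
    have "openin (top_of_set S2) (S2 \<inter> ball x \<epsilon>)" by (simp add: openin_open_Int)
    moreover have "S2 \<inter> ball x \<epsilon> \<noteq> {}" using xS \<open>\<epsilon> > 0\<close> by auto
    ultimately obtain y where "y \<in> S2 \<inter> ball x \<epsilon>" "y \<notin> G" using G_dense by blast
    then show "\<exists>y\<in>S2 - G. y \<noteq> x \<and> dist y x < \<epsilon>" using xG by (auto simp: dist_commute)
  qed
  moreover have "S2 - G = (\<Union>F\<in>FS. F)" using Union_components[of "S2 - G"] by (simp add: faces_def)
  ultimately obtain F1 where F1: "F1 \<in> FS" "x islimpt F1" using islimpt_UN_finite[OF finFS] by metis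
  have "x \<in> face_boundary F1"
    using F1 face_sub[OF F1(1)] xG unfolding face_boundary_def by (auto simp: closure_def)
  then have eC1: "e \<in> Cset F1" using in_Cset[OF F1(1) e xe] by blast
  define J where "J = face_boundary F1"
  obtain c where c: "simple_path c" "pathfinish c = pathstart c" "path_image c = J"
    using circle_simple_path[OF fbh[OF F1(1)]] J_def by blast
  have JG: "J \<subseteq> G" using fbG[OF F1(1)] J_def by simp
  have cS: "path_image c \<subseteq> S2" using c(3) JG G_sub by blast
  obtain U1 U2 where U: "openin (top_of_set S2) U1" "openin (top_of_set S2) U2"
    "connected U1" "connected U2" "U1 \<inter> U2 = {}" "U1 \<union> U2 = S2 - J"
    "J \<subseteq> closure U1" "J \<subseteq> closure U2"
    using Jordan_S2[OF c(1,2) cS] c(3) by blast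
  have peJ: "pim e \<subseteq> J" using eC1 by (simp add: Cset_def J_def)
  have xJ: "x \<in> J" using peJ eint_sub[OF e] xe by blast
  have other: "\<exists>F2\<in>FS. F2 \<noteq> F1 \<and> e \<in> Cset F2"
    if Ua: "F1 = Ua" and Ub: "Ub \<in> {U1, U2}" "Ua \<inter> Ub = {}" "J \<subseteq> closure Ub" "Ub \<subseteq> S2 - J"
    for Ua Ub
  proof -
    have "x islimpt (Ub - G)"
      unfolding islimpt_approachable
    proof (intro allI impI)
      fix \<epsilon> :: real assume "\<epsilon> > 0"
      then have "min \<epsilon> r > 0" using r by simp
      have "x \<in> closure Ub" using Ub(3) xJ by blast
      then obtain y where y: "y \<in> Ub" "dist y x < min \<epsilon> r"
        using \<open>min \<epsilon> r > 0\<close> unfolding closure_approachable by blast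
      have "y \<notin> J" using y Ub(4) by blast
      then have "y \<noteq> x" using xJ by blast
      have "y \<notin> G"
      proof
        assume "y \<in> G"
        then have "y \<in> eint e" using r y by (auto simp: dist_commute)
        then show False using \<open>y \<notin> J\<close> peJ eint_sub[OF e] by blast
      qed
      then show "\<exists>y'\<in>Ub - G. y' \<noteq> x \<and> dist y' x < \<epsilon>" using y \<open>y \<noteq> x\<close> by auto
    qed
    moreover have "Ub - G \<subseteq> (\<Union>F\<in>{F\<in>FS. F \<subseteq> Ub}. F)"
    proof
      fix y assume y: "y \<in> Ub - G"
      then have "y \<in> S2 - G" using Ub(4) by blast
      then obtain F where F: "F \<in> FS" "y \<in> F" using face_pt by blast
      have "F \<subseteq> U1 \<or> F \<subseteq> U2" using face_in_side[OF F(1) JG U(1,2,5,6)] .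
      then have "F \<subseteq> Ub" using Ub(1) U(5) F(2) y by blast
      then show "y \<in> (\<Union>F\<in>{F\<in>FS. F \<subseteq> Ub}. F)" using F by blast
    qed
    ultimately have lim: "x islimpt (\<Union>F\<in>{F\<in>FS. F \<subseteq> Ub}. F)" using islimpt_subset by blast
    have finI: "finite {F\<in>FS. F \<subseteq> Ub}" using finFS by simp
    have "\<exists>F2\<in>{F\<in>FS. F \<subseteq> Ub}. x islimpt F2" by (rule islimpt_UN_finite[OF finI lim])
    then obtain F2 where F2: "F2 \<in> FS" "F2 \<subseteq> Ub" "x islimpt F2" by blast
    have "x \<in> face_boundary F2"
      using F2 face_sub[OF F2(1)] xG unfolding face_boundary_def by (auto simp: closure_def)
    then have "e \<in> Cset F2" using in_Cset[OF F2(1) e xe] by blast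
    moreover have "F2 \<noteq> F1" using F2(2) Ua Ub(2) face_ne[OF F2(1)] by blast
    ultimately show ?thesis using F2(1) by blast
  qed
  have "F1 \<subseteq> U1 \<or> F1 \<subseteq> U2" using face_in_side[OF F1(1) JG U(1,2,5,6)] .
  moreover have "U1 \<inter> face_boundary F1 = {}" "U2 \<inter> face_boundary F1 = {}" using U(6) J_def by auto
  ultimately have "F1 = U1 \<or> F1 = U2" using side[OF F1(1) U(1,3)] side[OF F1(1) U(2,4)] by blast
  then have "\<exists>F2\<in>FS. F2 \<noteq> F1 \<and> e \<in> Cset F2"
  proof
    assume "F1 = U1"
    then show ?thesis using other[of U1 U2] U by blast
  next
    assume "F1 = U2"
    then show ?thesis using other[of U2 U1] U by blast
  qed
  then show ?thesis using F1(1) eC1 by blast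
qed

end

context pgc begin

lemma main:
  assumes chk: "is_checkerboard V E pv pe col" and e: "e \<in> E"
  shows "(\<Sum>C\<in>cycles_through E pe e. omega V E pv pe col C) = 0"
proof -
  obtain F1 F2 where F: "F1 \<in> FS" "F2 \<in> FS" "F1 \<noteq> F2" "e \<in> Cset F1" "e \<in> Cset F2"
    using two_faces[OF e] by blast
  have adj: "pim e \<subseteq> closure F" if "F \<in> FS" "e \<in> Cset F" for F
    using that fb_closure[OF that(1)] by (auto simp: Cset_def)
  have chk': "col Fa \<noteq> col Fb" if "Fa \<in> FS" "Fb \<in> FS" "Fa \<noteq> Fb" "e \<in> Cset Fa" "e \<in> Cset Fb" for Fa Fb
  proof -
    have "pim e \<subseteq> closure Fa \<inter> closure Fb" using adj that by blast
    then show ?thesis using chk that e unfolding is_checkerboard_def by blast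
  qed
  have col12: "col F1 \<noteq> col F2" using chk' F by blast
  have only: "F = F1 \<or> F = F2" if "F \<in> FS" "e \<in> Cset F" for F
  proof (rule ccontr)
    assume "\<not> (F = F1 \<or> F = F2)"
    then have "col F \<noteq> col F1" "col F \<noteq> col F2" using chk' F that by blast+
    then show False using col12 by blast
  qed
  define C1 where "C1 = Cset F1"
  define C2 where "C2 = Cset F2"
  have cyc: "Cset F \<in> cycles E pe" if "F \<in> FS" "e \<in> Cset F" for F
    using that Cset_E fbh[OF that(1)] fbE[OF that(1)]
    by (auto simp: cycles_def is_cycle_def)
  have C12: "C1 \<noteq> C2"
  proof
    assume "C1 = C2"
    then have "face_boundary F1 = face_boundary F2" using fbE F by (simp add: C1_def C2_def)
    then show False using Nface F by blast
  qed
  have black: "C \<in> black_cycles V E pv pe col \<longleftrightarrow> (C = C1 \<and> col F1) \<or> (C = C2 \<and> col F2)"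
    if C: "C \<in> cycles_through E pe e" for C
  proof
    assume "C \<in> black_cycles V E pv pe col"
    then obtain F where Fb: "F \<in> FS" "col F" "face_boundary F = edges_image pe C" and Cc: "C \<in> cycles E pe"
      by (auto simp: black_cycles_def)
    have "C \<subseteq> E" using Cc by (simp add: cycles_def is_cycle_def)
    then have "Cset F = C" using EI[OF Cset_E] fbE[OF Fb(1)] Fb(3) by simp
    moreover have "e \<in> C" using C by (simp add: cycles_through_def)
    ultimately have "F = F1 \<or> F = F2" using only Fb(1) by blast
    then show "(C = C1 \<and> col F1) \<or> (C = C2 \<and> col F2)"
      using Fb(2) \<open>Cset F = C\<close> by (auto simp: C1_def C2_def)
  next
    assume "(C = C1 \<and> col F1) \<or> (C = C2 \<and> col F2)"
    then show "C \<in> black_cycles V E pv pe col"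
      using C F fbE by (auto simp: black_cycles_def cycles_through_def C1_def C2_def)
  qed
  have white: "C \<in> white_cycles V E pv pe col \<longleftrightarrow> (C = C1 \<and> \<not> col F1) \<or> (C = C2 \<and> \<not> col F2)"
    if C: "C \<in> cycles_through E pe e" for C
  proof
    assume "C \<in> white_cycles V E pv pe col"
    then obtain F where Fb: "F \<in> FS" "\<not> col F" "face_boundary F = edges_image pe C" and Cc: "C \<in> cycles E pe"
      by (auto simp: white_cycles_def)
    have "C \<subseteq> E" using Cc by (simp add: cycles_def is_cycle_def)
    then have "Cset F = C" using EI[OF Cset_E] fbE[OF Fb(1)] Fb(3) by simp
    moreover have "e \<in> C" using C by (simp add: cycles_through_def)
    ultimately have "F = F1 \<or> F = F2" using only Fb(1) by blast
    then show "(C = C1 \<and> \<not> col F1) \<or> (C = C2 \<and> \<not> col F2)"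
      using Fb(2) \<open>Cset F = C\<close> by (auto simp: C1_def C2_def)
  next
    assume "(C = C1 \<and> \<not> col F1) \<or> (C = C2 \<and> \<not> col F2)"
    then show "C \<in> white_cycles V E pv pe col"
      using C F fbE by (auto simp: white_cycles_def cycles_through_def C1_def C2_def)
  qed
  have C1in: "C1 \<in> cycles_through E pe e" using cyc F by (simp add: cycles_through_def C1_def)
  have C2in: "C2 \<in> cycles_through E pe e" using cyc F by (simp add: cycles_through_def C2_def)
  have o1: "omega V E pv pe col C1 = (if col F1 then 1 else -1)"
    using black[OF C1in] white[OF C1in] C12 by (auto simp: omega_def)
  have o2: "omega V E pv pe col C2 = (if col F2 then 1 else -1)"
    using black[OF C2in] white[OF C2in] C12 by (auto simp: omega_def)
  have o0: "omega V E pv pe col C = 0" if "C \<in> cycles_through E pe e - {C1, C2}" for C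
    using that black[of C] white[of C] by (auto simp: omega_def)
  have fin: "finite (cycles_through E pe e)"
  proof -
    have "cycles_through E pe e \<subseteq> Pow E" by (auto simp: cycles_through_def cycles_def is_cycle_def)
    then show ?thesis using finE finite_subset by blast
  qed
  have "(\<Sum>C\<in>cycles_through E pe e. omega V E pv pe col C) = (\<Sum>C\<in>{C1, C2}. omega V E pv pe col C)"
    by (rule sum.mono_neutral_right[OF fin]) (use C1in C2in o0 in auto)
  also have "\<dots> = omega V E pv pe col C1 + omega V E pv pe col C2" using C12 by simp
  also have "\<dots> = 0" using o1 o2 col12 by auto
  finally show ?thesis .
qed

end

theorem proposition4p1:
  fixes V :: "'v set" and E :: "'e set" and src tgt :: "'e \<Rightarrow> 'v"
    and pv :: "'v \<Rightarrow> real^3" and pe :: "'e \<Rightarrow> real \<Rightarrow> real^3"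
    and col :: "(real^3) set \<Rightarrow> bool"
  assumes "is_graph V E src tgt"
    and "is_embedding V E src tgt pv pe"
    and "\<not> (graph_image V E pv pe homeomorphic sphere (0::complex) 1)"
    and "is_cellular V E pv pe"
    and "is_checkerboard V E pv pe col"
    and "e \<in> E"
  shows "(\<Sum>C\<in>cycles_through E pe e. omega V E pv pe col C) = 0"
proof -
  interpret pgc V E src tgt pv pe
    using assms(1-4) by (simp add: pgc_def pg_def pgc_axioms_def)
  show ?thesis using main[OF assms(5,6)] .
qed

end
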